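(* For $\beta\ge4$, the quantum query complexity of the following task is $\Omega(\beta)$: given a block-encoding $U$ of $\sqrt{H}$ for a Hamiltonian $H$, prepare a quantum state $\rho$ with $\|\rho-e^{-\beta H}/\mathcal{Z}\|_1\le 0.01$, where $\mathcal Z=\operatorname{tr}(e^{-\beta H})$.
   Context: A block-encoding of a matrix $A$ is a unitary $U$ whose upper-left block equals $A$. One query means one application of $U$, $U^\dagger$, or their controlled versions. $\|\cdot\|_1$ is the trace norm. The query complexity is the minimum number of queries of a quantum algorithm that achieves the stated preparation (succeeding for every valid $H$). *)

theory Defs
  imports "Jordan_Normal_Form.Schur_Decomposition"
begin

definition unitary_mat :: "nat \<Rightarrow> complex mat \<Rightarrow> bool" where
  "unitary_mat n U \<longleftrightarrow> U \<in> carrier_mat n n \<and> U * mat_adjoint U = 1\<^sub>m n \<and> mat_adjoint U * U = 1\<^sub>m n"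

definition hermitian_mat :: "nat \<Rightarrow> complex mat \<Rightarrow> bool" where
  "hermitian_mat n A \<longleftrightarrow> A \<in> carrier_mat n n \<and> mat_adjoint A = A"

definition psd_mat :: "nat \<Rightarrow> complex mat \<Rightarrow> bool" where
  "psd_mat n A \<longleftrightarrow> hermitian_mat n A \<and>
     (\<forall>v \<in> carrier_vec n. Re (conjugate v \<bullet> (A *\<^sub>v v)) \<ge> 0)"

definition mat_trace :: "complex mat \<Rightarrow> complex" where
  "mat_trace A = (\<Sum>i<dim_row A. A $$ (i, i))"

text \<open>Functional calculus for Hermitian matrices via a spectral decomposition
  \<open>A = V diag(d) V\<^sup>\<dagger>\<close> (the result is independent of the chosen decomposition).\<close>
definition spectral_dec :: "nat \<Rightarrow> complex mat \<Rightarrow> complex mat \<Rightarrow> (nat \<Rightarrow> real) \<Rightarrow> bool" where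
  "spectral_dec n A V d \<longleftrightarrow> unitary_mat n V \<and>
     A = V * mat_diag n (\<lambda>i. complex_of_real (d i)) * mat_adjoint V"

definition mat_fun :: "(real \<Rightarrow> real) \<Rightarrow> complex mat \<Rightarrow> complex mat" where
  "mat_fun f A = (let n = dim_row A;
                      (V, d) = (SOME (V, d). spectral_dec n A V d)
                  in V * mat_diag n (\<lambda>i. complex_of_real (f (d i))) * mat_adjoint V)"

definition mat_sqrt :: "complex mat \<Rightarrow> complex mat" where
  "mat_sqrt A = mat_fun sqrt A"

definition trace_norm :: "complex mat \<Rightarrow> real" where
  "trace_norm A = Re (mat_trace (mat_sqrt (mat_adjoint A * A)))"

definition gibbs_state :: "real \<Rightarrow> complex mat \<Rightarrow> complex mat" where
  "gibbs_state \<beta> H = (let G = mat_fun (\<lambda>x. exp (- \<beta> * x)) H in (1 / mat_trace G) \<cdot>\<^sub>m G)"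

definition block_encoding :: "nat \<Rightarrow> nat \<Rightarrow> complex mat \<Rightarrow> complex mat \<Rightarrow> bool" where
  "block_encoding N M A U \<longleftrightarrow> N \<le> M \<and> A \<in> carrier_mat N N \<and> unitary_mat M U \<and>
     (\<forall>i<N. \<forall>j<N. U $$ (i, j) = A $$ (i, j))"

text \<open>Kronecker product (row-major index convention).\<close>
definition kron :: "complex mat \<Rightarrow> complex mat \<Rightarrow> complex mat" where
  "kron A B = mat (dim_row A * dim_row B) (dim_col A * dim_col B)
     (\<lambda>(i, j). A $$ (i div dim_row B, j div dim_col B) * B $$ (i mod dim_row B, j mod dim_col B))"

text \<open>Every query acts on a register of dimension \<open>2M\<close> (control qubit \<open>\<otimes>\<close> the \<open>M\<close>-dim
  register of \<open>U\<close>); uncontrolled queries ignore the control qubit.\<close>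
datatype qkind = QU | QUadj | QCU | QCUadj

definition query_op :: "nat \<Rightarrow> complex mat \<Rightarrow> qkind \<Rightarrow> complex mat" where
  "query_op M U k = (case k of
      QU \<Rightarrow> kron (1\<^sub>m 2) U
    | QUadj \<Rightarrow> kron (1\<^sub>m 2) (mat_adjoint U)
    | QCU \<Rightarrow> four_block_mat (1\<^sub>m M) (0\<^sub>m M M) (0\<^sub>m M M) U
    | QCUadj \<Rightarrow> four_block_mat (1\<^sub>m M) (0\<^sub>m M M) (0\<^sub>m M M) (mat_adjoint U))"

text \<open>An algorithm works on a space of dimension \<open>D = 2M\<cdot>R = N\<cdot>S\<close>: starting from
  the basis state \<open>|0\<rangle>\<close>, it applies \<open>V\<^sub>0\<close>, then for each step \<open>(k\<^sub>t, V\<^sub>t)\<close> the query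
  \<open>query_op k\<^sub>t \<otimes> I\<^sub>R\<close> followed by the unitary \<open>V\<^sub>t\<close>. The output is the reduced state
  on the first (\<open>N\<close>-dimensional) tensor factor in the decomposition \<open>D = N\<cdot>S\<close>.
  The number of queries is the number of steps.\<close>
definition valid_alg :: "nat \<Rightarrow> nat \<Rightarrow> nat \<Rightarrow> nat \<Rightarrow> complex mat \<Rightarrow> (qkind \<times> complex mat) list \<Rightarrow> bool" where
  "valid_alg N M R S V0 steps \<longleftrightarrow> 2 * M * R = N * S \<and> unitary_mat (2 * M * R) V0 \<and>
     (\<forall>st \<in> set steps. unitary_mat (2 * M * R) (snd st))"

definition alg_unitary :: "nat \<Rightarrow> nat \<Rightarrow> complex mat \<Rightarrow> (qkind \<times> complex mat) list \<Rightarrow> complex mat \<Rightarrow> complex mat" where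
  "alg_unitary M R V0 steps U =
     foldl (\<lambda>W (k, V). V * kron (query_op M U k) (1\<^sub>m R) * W) V0 steps"

definition partial_trace_2 :: "nat \<Rightarrow> nat \<Rightarrow> complex vec \<Rightarrow> complex mat" where
  "partial_trace_2 N S \<psi> = mat N N (\<lambda>(i, j). \<Sum>s<S. \<psi> $ (i * S + s) * cnj (\<psi> $ (j * S + s)))"

definition alg_output :: "nat \<Rightarrow> nat \<Rightarrow> nat \<Rightarrow> nat \<Rightarrow> complex mat \<Rightarrow> (qkind \<times> complex mat) list \<Rightarrow> complex mat \<Rightarrow> complex mat" where
  "alg_output N M R S V0 steps U =
     partial_trace_2 N S (alg_unitary M R V0 steps U *\<^sub>v unit_vec (2 * M * R) 0)"

definition solves_gibbs :: "real \<Rightarrow> nat \<Rightarrow> nat \<Rightarrow> nat \<Rightarrow> nat \<Rightarrow> complex mat \<Rightarrow> (qkind \<times> complex mat) list \<Rightarrow> bool" where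
  "solves_gibbs \<beta> N M R S V0 steps \<longleftrightarrow>
     (\<forall>H U. psd_mat N H \<longrightarrow> block_encoding N M (mat_sqrt H) U \<longrightarrow>
        trace_norm (alg_output N M R S V0 steps U - gibbs_state \<beta> H) \<le> 0.01)"

end

theory Submission
  imports Defs "HOL-Analysis.L2_Norm"
begin


lemma adj_dim[simp]: "dim_row (mat_adjoint A) = dim_col A" "dim_col (mat_adjoint A) = dim_row A"
  unfolding mat_adjoint_def by simp_all

lemma adj_idx[simp]: "i < dim_col A \<Longrightarrow> j < dim_row A \<Longrightarrow> mat_adjoint (A::complex mat) $$ (i,j) = cnj (A $$ (j,i))"
  unfolding mat_adjoint_def by (simp add: mat_of_rows_index)

lemma adj_carrier[simp]: "A \<in> carrier_mat n m \<Longrightarrow> mat_adjoint A \<in> carrier_mat m n"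
  unfolding carrier_mat_def by simp

lemma mult_idx: assumes A: "A \<in> carrier_mat n m" and B: "B \<in> carrier_mat m k" and i: "i < n" and j: "j < k"
  shows "(A * B) $$ (i,j) = (\<Sum>l<m. A $$ (i,l) * B $$ (l,j))"
proof -
  have "(A*B)$$(i,j) = row A i \<bullet> col B j" using A B i j by simp
  also have "\<dots> = (\<Sum>l\<in>{0..<m}. row A i $ l * col B j $ l)" unfolding scalar_prod_def using B by simp
  also have "\<dots> = (\<Sum>l<m. A$$(i,l)*B$$(l,j))" 
    by (rule sum.cong) (use A B i j in \<open>auto simp: atLeast0LessThan\<close>)
  finally show ?thesis .
qed

lemma mult_vec_idx: assumes A: "A \<in> carrier_mat n m" and v: "v \<in> carrier_vec m" and i: "i < n"
  shows "(A *\<^sub>v v) $ i = (\<Sum>l<m. A $$ (i,l) * v $ l)"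
proof -
  have "(A *\<^sub>v v) $ i = row A i \<bullet> v" using A i by simp
  also have "\<dots> = (\<Sum>l\<in>{0..<m}. row A i $ l * v $ l)" unfolding scalar_prod_def using v by simp
  also have "\<dots> = (\<Sum>l<m. A$$(i,l)*v $ l)" 
    by (rule sum.cong) (use A v i in \<open>auto simp: atLeast0LessThan\<close>)
  finally show ?thesis .
qed

lemma adj_mult: assumes A: "(A::complex mat) \<in> carrier_mat n m" and B: "B \<in> carrier_mat m k"
  shows "mat_adjoint (A*B) = mat_adjoint B * mat_adjoint A"
proof -
  have dA: "dim_row A = n" "dim_col A = m" and dB: "dim_row B = m" "dim_col B = k" using A B by auto
  show ?thesis
  proof (rule eq_matI)
    fix i j assume i: "i < dim_row (mat_adjoint B * mat_adjoint A)" and j: "j < dim_col (mat_adjoint B * mat_adjoint A)"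
    hence i: "i < k" and j: "j < n" by (simp_all add: dA dB)
    have "mat_adjoint (A*B) $$ (i,j) = cnj ((A*B) $$ (j,i))" using i j by (simp add: dA dB)
    also have "\<dots> = cnj (\<Sum>l<m. A $$ (j,l) * B $$ (l,i))" by (simp only: mult_idx[OF A B j i])
    also have "\<dots> = (\<Sum>l<m. mat_adjoint B $$ (i,l) * mat_adjoint A $$ (l,j))"
      unfolding cnj_sum
    proof (rule sum.cong[OF refl])
      fix l assume "l \<in> {..<m}"
      hence l: "l < m" by simp
      show "cnj (A $$ (j, l) * B $$ (l, i)) = mat_adjoint B $$ (i, l) * mat_adjoint A $$ (l, j)"
        using l i j by (simp add: dA dB mult.commute)
    qed
    also have "\<dots> = (mat_adjoint B * mat_adjoint A) $$ (i,j)"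
      by (rule mult_idx[symmetric], insert A B i j, auto)
    finally show "mat_adjoint (A*B) $$ (i,j) = (mat_adjoint B * mat_adjoint A) $$ (i,j)" .
  qed (simp_all add: dA dB)
qed

lemma adj_adj: "mat_adjoint (mat_adjoint (A::complex mat)) = A"
  by (rule eq_matI) simp_all

definition nsq :: "complex vec \<Rightarrow> real" where
  "nsq v = (\<Sum>i<dim_vec v. (cmod (v $ i))^2)"

definition nv :: "complex vec \<Rightarrow> real" where
  "nv v = L2_set (\<lambda>i. cmod (v $ i)) {..<dim_vec v}"

lemma nv_nsq: "nv v = sqrt (nsq v)" unfolding nv_def nsq_def L2_set_def by simp

lemma nsq_nonneg: "nsq v \<ge> 0" unfolding nsq_def by (simp add: sum_nonneg)

lemma nsq_cplx: "complex_of_real (nsq v) = (\<Sum>i<dim_vec v. v $ i * cnj (v $ i))"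
  unfolding nsq_def of_real_sum by (intro sum.cong refl) (rule complex_norm_square)

lemma unitary_nsq: assumes U: "unitary_mat n V" and v: "v \<in> carrier_vec n"
  shows "nsq (V *\<^sub>v v) = nsq v"
proof -
  have V: "V \<in> carrier_mat n n" and VV: "mat_adjoint V * V = 1\<^sub>m n" using U unfolding unitary_mat_def by auto
  have d: "\<And>l k. l < n \<Longrightarrow> k < n \<Longrightarrow> (\<Sum>i<n. cnj (V$$(i,l)) * V$$(i,k)) = (if l = k then 1 else 0)"
  proof -
    fix l k assume l: "l < n" and k: "k < n"
    have "(mat_adjoint V * V) $$ (l,k) = (\<Sum>i<n. mat_adjoint V $$ (l,i) * V $$ (i,k))"
      by (rule mult_idx[OF adj_carrier[OF V] V l k])
    also have "\<dots> = (\<Sum>i<n. cnj (V$$(i,l)) * V$$(i,k))" using V l by (intro sum.cong) auto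
    finally show "(\<Sum>i<n. cnj (V$$(i,l)) * V$$(i,k)) = (if l = k then 1 else 0)" using VV l k by simp
  qed
  have e1: "\<And>i. i < n \<Longrightarrow> (V *\<^sub>v v) $ i * cnj ((V *\<^sub>v v) $ i) =
      (\<Sum>k<n. \<Sum>l<n. (V$$(i,k) * v$k) * (cnj (V$$(i,l)) * cnj (v$l)))"
    by (simp only: mult_vec_idx[OF V v] cnj_sum sum_product complex_cnj_mult)
  have "complex_of_real (nsq (V *\<^sub>v v)) = (\<Sum>i<n. (V *\<^sub>v v) $ i * cnj ((V *\<^sub>v v) $ i))"
    using V by (simp add: nsq_cplx)
  also have "\<dots> = (\<Sum>i<n. \<Sum>k<n. \<Sum>l<n. (V$$(i,k) * v$k) * (cnj (V$$(i,l)) * cnj (v$l)))"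
    by (intro sum.cong refl) (simp add: e1)
  also have "\<dots> = (\<Sum>k<n. \<Sum>i<n. \<Sum>l<n. (V$$(i,k) * v$k) * (cnj (V$$(i,l)) * cnj (v$l)))"
    by (rule sum.swap)
  also have "\<dots> = (\<Sum>k<n. \<Sum>l<n. \<Sum>i<n. (V$$(i,k) * v$k) * (cnj (V$$(i,l)) * cnj (v$l)))"
    by (rule sum.cong[OF refl]) (rule sum.swap)
  also have "\<dots> = (\<Sum>k<n. \<Sum>l<n. v$k * cnj (v$l) * (\<Sum>i<n. cnj (V$$(i,l)) * V$$(i,k)))"
    by (intro sum.cong refl) (simp add: sum_distrib_left mult_ac)
  also have "\<dots> = (\<Sum>k<n. \<Sum>l<n. if l = k then v$k * cnj (v$l) else 0)"
    by (intro sum.cong refl) (simp add: d)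
  also have "\<dots> = (\<Sum>k<n. v$k * cnj (v$k))"
    by (intro sum.cong refl) simp
  also have "\<dots> = complex_of_real (nsq v)" using v by (simp add: nsq_cplx)
  finally show ?thesis by simp
qed

definition opn :: "complex mat \<Rightarrow> nat \<Rightarrow> real \<Rightarrow> bool" where
  "opn A n e \<longleftrightarrow> (\<forall>w\<in>carrier_vec n. nsq (A *\<^sub>v w) \<le> e^2 * nsq w)"

lemma sum_grp: "(\<Sum>j<n*R. (g::nat\<Rightarrow>'a::comm_monoid_add) j) = (\<Sum>q<n. \<Sum>r<R. g (q*R + r))"
proof -
  have "(\<Sum>j<n*R. g j) = (\<Sum>q<n. sum g {q*R..<q*R+R})" by (rule sum.nat_group[symmetric])
  also have "\<dots> = (\<Sum>q<n. \<Sum>r<R. g (q*R + r))"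
  proof (rule sum.cong[OF refl])
    fix q
    show "sum g {q*R..<q*R+R} = (\<Sum>r<R. g (q*R + r))"
      by (subst sum.atLeastLessThan_shift_0) (simp add: atLeast0LessThan comp_def)
  qed
  finally show ?thesis .
qed

lemma idx_lt: "p < (K::nat) \<Longrightarrow> m < n \<Longrightarrow> p*n+m < K*n"
proof -
  assume p: "p < K" and m: "m < n"
  have "Suc p * n \<le> K * n" using p by (intro mult_le_mono1) simp
  thus ?thesis using m by simp
qed

lemma blockC: assumes F: "F \<in> carrier_mat (K*n) (K*n)"
  and A: "\<And>p. p<K \<Longrightarrow> A p \<in> carrier_mat n n \<and> opn (A p) n e"
  and ent: "\<And>p q m m'. p<K \<Longrightarrow> q<K \<Longrightarrow> m<n \<Longrightarrow> m'<n \<Longrightarrow>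
     F $$ (p*n+m, q*n+m') = (if p = q then A p $$ (m,m') else 0)"
  shows "opn F (K*n) e"
  unfolding opn_def
proof
  fix v :: "complex vec" assume v: "v \<in> carrier_vec (K*n)"
  define w where "w p = vec n (\<lambda>m. v $ (p*n+m))" for p
  have w: "w p \<in> carrier_vec n" for p unfolding w_def by simp
  have Fv: "(F *\<^sub>v v) $ (p*n+m) = (A p *\<^sub>v w p) $ m" if p: "p < K" and m: "m < n" for p m
  proof -
    have "(F *\<^sub>v v) $ (p*n+m) = (\<Sum>j<K*n. F $$ (p*n+m, j) * v $ j)"
      by (rule mult_vec_idx[OF F v idx_lt[OF p m]])
    also have "\<dots> = (\<Sum>q<K. \<Sum>m'<n. F $$ (p*n+m, q*n+m') * v $ (q*n+m'))" by (rule sum_grp)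
    also have "\<dots> = (\<Sum>q<K. if p = q then (\<Sum>m'<n. A p $$ (m,m') * w p $ m') else 0)"
      by (intro sum.cong refl) (auto simp: ent p m w_def)
    also have "\<dots> = (\<Sum>m'<n. A p $$ (m,m') * w p $ m')" using p by simp
    also have "\<dots> = (A p *\<^sub>v w p) $ m" by (rule mult_vec_idx[OF conjunct1[OF A[OF p]] w m, symmetric])
    finally show ?thesis .
  qed
  have dF: "dim_vec (F *\<^sub>v v) = K*n" using F by simp
  have "nsq (F *\<^sub>v v) = (\<Sum>p<K. \<Sum>m<n. (cmod ((F *\<^sub>v v) $ (p*n+m)))^2)"
    unfolding nsq_def dF by (rule sum_grp)
  also have "\<dots> = (\<Sum>p<K. nsq (A p *\<^sub>v w p))"
  proof (rule sum.cong[OF refl])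
    fix p assume "p \<in> {..<K}"
    hence p: "p < K" by simp
    have "dim_vec (A p *\<^sub>v w p) = n" using A[OF p] by auto
    thus "(\<Sum>m<n. (cmod ((F *\<^sub>v v) $ (p*n+m)))^2) = nsq (A p *\<^sub>v w p)"
      unfolding nsq_def using Fv[OF p] by simp
  qed
  also have "\<dots> \<le> (\<Sum>p<K. e^2 * nsq (w p))"
    using A w unfolding opn_def by (intro sum_mono) auto
  also have "\<dots> = e^2 * (\<Sum>p<K. \<Sum>m<n. (cmod (v $ (p*n+m)))^2)"
    unfolding sum_distrib_left nsq_def w_def by simp
  also have "\<dots> = e^2 * nsq v" unfolding nsq_def using v by (simp add: sum_grp)
  finally show "nsq (F *\<^sub>v v) \<le> e^2 * nsq v" .
qed

lemma blockS: assumes F: "F \<in> carrier_mat (n*R) (n*R)"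
  and A: "A \<in> carrier_mat n n" and oA: "opn A n e"
  and ent: "\<And>p q r r'. p<n \<Longrightarrow> q<n \<Longrightarrow> r<R \<Longrightarrow> r'<R \<Longrightarrow>
     F $$ (p*R+r, q*R+r') = (if r = r' then A $$ (p,q) else 0)"
  shows "opn F (n*R) e"
  unfolding opn_def
proof
  fix v :: "complex vec" assume v: "v \<in> carrier_vec (n*R)"
  define w where "w r = vec n (\<lambda>p. v $ (p*R+r))" for r
  have w: "w r \<in> carrier_vec n" for r unfolding w_def by simp
  have Fv: "(F *\<^sub>v v) $ (p*R+r) = (A *\<^sub>v w r) $ p" if p: "p < n" and r: "r < R" for p r
  proof -
    have "(F *\<^sub>v v) $ (p*R+r) = (\<Sum>j<n*R. F $$ (p*R+r, j) * v $ j)"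
      by (rule mult_vec_idx[OF F v idx_lt[OF p r]])
    also have "\<dots> = (\<Sum>q<n. \<Sum>r'<R. F $$ (p*R+r, q*R+r') * v $ (q*R+r'))" by (rule sum_grp)
    also have "\<dots> = (\<Sum>q<n. \<Sum>r'<R. if r = r' then A $$ (p,q) * v $ (q*R+r') else 0)"
      by (intro sum.cong refl) (auto simp: ent p r)
    also have "\<dots> = (\<Sum>q<n. A $$ (p,q) * w r $ q)"
      using r by (intro sum.cong refl) (auto simp: w_def)
    also have "\<dots> = (A *\<^sub>v w r) $ p" by (rule mult_vec_idx[OF A w p, symmetric])
    finally show ?thesis .
  qed
  have dF: "dim_vec (F *\<^sub>v v) = n*R" using F by simp
  have "nsq (F *\<^sub>v v) = (\<Sum>p<n. \<Sum>r<R. (cmod ((F *\<^sub>v v) $ (p*R+r)))^2)"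
    unfolding nsq_def dF by (rule sum_grp)
  also have "\<dots> = (\<Sum>p<n. \<Sum>r<R. (cmod ((A *\<^sub>v w r) $ p))^2)"
    by (intro sum.cong refl) (simp add: Fv)
  also have "\<dots> = (\<Sum>r<R. nsq (A *\<^sub>v w r))"
    unfolding nsq_def using A by (simp add: sum.swap[of _ "{..<n}" "{..<R}"])
  also have "\<dots> \<le> (\<Sum>r<R. e^2 * nsq (w r))"
    using oA w unfolding opn_def by (intro sum_mono) auto
  also have "\<dots> = e^2 * (\<Sum>r<R. \<Sum>p<n. (cmod (v $ (p*R+r)))^2)"
    unfolding sum_distrib_left nsq_def w_def by simp
  also have "\<dots> = e^2 * nsq v" unfolding nsq_def using v by (simp add: sum_grp sum.swap[of _ "{..<n}" "{..<R}"])
  finally show "nsq (F *\<^sub>v v) \<le> e^2 * nsq v" .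
qed


lemma opn_nonneg_one: "unitary_mat n U \<Longrightarrow> opn U n 1"
  unfolding opn_def using unitary_nsq by simp

lemma unitary_adj: "unitary_mat n U \<Longrightarrow> unitary_mat n (mat_adjoint U)"
  unfolding unitary_mat_def by (simp add: adj_adj)

lemma kron_dim[simp]: "dim_row (kron A B) = dim_row A * dim_row B" "dim_col (kron A B) = dim_col A * dim_col B"
  unfolding kron_def by simp_all

lemma kron_idx: "i < dim_row A * dim_row B \<Longrightarrow> j < dim_col A * dim_col B \<Longrightarrow>
  kron A B $$ (i,j) = A $$ (i div dim_row B, j div dim_col B) * B $$ (i mod dim_row B, j mod dim_col B)"
  unfolding kron_def by simp

lemma divmod_simps: "m < (M::nat) \<Longrightarrow> (p*M+m) div M = p" "m < (M::nat) \<Longrightarrow> (p*M+m) mod M = m"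
  by simp_all

definition qblk :: "nat \<Rightarrow> complex mat \<Rightarrow> qkind \<Rightarrow> nat \<Rightarrow> complex mat" where
  "qblk M U k p = (case k of QU \<Rightarrow> U | QUadj \<Rightarrow> mat_adjoint U
      | QCU \<Rightarrow> (if p = 0 then 1\<^sub>m M else U) | QCUadj \<Rightarrow> (if p = 0 then 1\<^sub>m M else mat_adjoint U))"

lemma query_carrier: "U \<in> carrier_mat M M \<Longrightarrow> query_op M U k \<in> carrier_mat (2*M) (2*M)"
proof -
  assume U: "U \<in> carrier_mat M M"
  hence "dim_row U = M" "dim_col U = M" by auto
  thus ?thesis unfolding query_op_def by (cases k) (auto intro!: carrier_matI)
qed

lemma qblk_carrier: "U \<in> carrier_mat M M \<Longrightarrow> qblk M U k p \<in> carrier_mat M M"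
  unfolding qblk_def by (cases k) auto

lemma qent: assumes U: "U \<in> carrier_mat M M" and p: "p < 2" and q: "q < 2" and m: "m < M" and m': "m' < M"
  shows "query_op M U k $$ (p*M+m, q*M+m') = (if p = q then qblk M U k p $$ (m,m') else 0)"
proof -
  have dU: "dim_row U = M" "dim_col U = M" using U by auto
  have i1: "p*M+m < 2*M" and i2: "q*M+m' < 2*M" using idx_lt[OF p m] idx_lt[OF q m'] by auto
  show ?thesis
  proof (cases k)
    case QU
    show ?thesis unfolding QU query_op_def qblk_def using i1 i2 p q m m'
      by (simp add: kron_idx dU)
  next
    case QUadj
    show ?thesis unfolding QUadj query_op_def qblk_def using i1 i2 p q m m'
      by (simp add: kron_idx dU)
  next
    case QCU
    show ?thesis unfolding QCU query_op_def qblk_def using i1 i2 p q m m'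
      by (cases p; cases q) (simp_all add: dU)
  next
    case QCUadj
    show ?thesis unfolding QCUadj query_op_def qblk_def using i1 i2 p q m m'
      by (cases p; cases q) (simp_all add: dU)
  qed
qed


lemma opn_one: "opn (1\<^sub>m n) n 1"
  unfolding opn_def by simp

lemma nsq_zero: "nsq (0\<^sub>v n) = 0" unfolding nsq_def by simp

lemma opn_zero: "d \<ge> 0 \<Longrightarrow> opn (1\<^sub>m n - 1\<^sub>m n) n d"
  unfolding opn_def
proof
  fix w :: "complex vec" assume w: "w \<in> carrier_vec n"
  have "1\<^sub>m n - 1\<^sub>m n = (0\<^sub>m n n :: complex mat)" by (rule minus_r_inv_mat[OF one_carrier_mat])
  hence "(1\<^sub>m n - 1\<^sub>m n) *\<^sub>v w = 0\<^sub>m n n *\<^sub>v w" by (rule arg_cong[where f = "\<lambda>A. A *\<^sub>v w"])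
  also have "\<dots> = 0\<^sub>v n" using w by (intro eq_vecI) auto
  finally show "nsq ((1\<^sub>m n - 1\<^sub>m n) *\<^sub>v w) \<le> d^2 * nsq w" using nsq_nonneg[of w] by (simp add: nsq_zero)
qed

lemma query_opn1: assumes U: "unitary_mat M U" shows "opn (query_op M U k) (2*M) 1"
proof -
  have UC: "U \<in> carrier_mat M M" using U unfolding unitary_mat_def by auto
  show ?thesis
  proof (rule blockC[where A = "qblk M U k"])
    show "query_op M U k \<in> carrier_mat (2*M) (2*M)" by (rule query_carrier[OF UC])
  next
    fix p assume "p < (2::nat)"
    show "qblk M U k p \<in> carrier_mat M M \<and> opn (qblk M U k p) M 1"
      using qblk_carrier[OF UC] opn_one opn_nonneg_one[OF U] opn_nonneg_one[OF unitary_adj[OF U]] UC adj_carrier[OF UC]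
      unfolding qblk_def by (cases k) auto
  next
    fix p q m m' :: nat assume "p < 2" "q < 2" "m < M" "m' < M"
    thus "query_op M U k $$ (p*M+m, q*M+m') = (if p = q then qblk M U k p $$ (m,m') else 0)"
      by (rule qent[OF UC])
  qed
qed

lemma query_opn_diff: assumes U1: "U1 \<in> carrier_mat M M" and U2: "U2 \<in> carrier_mat M M"
  and o1: "opn (U1 - U2) M d" and o2: "opn (mat_adjoint U1 - mat_adjoint U2) M d" and d: "d \<ge> 0"
  shows "opn (query_op M U1 k - query_op M U2 k) (2*M) d"
proof (rule blockC[where A = "\<lambda>p. qblk M U1 k p - qblk M U2 k p"])
  show "query_op M U1 k - query_op M U2 k \<in> carrier_mat (2*M) (2*M)"
    by (rule minus_carrier_mat[OF query_carrier[OF U2]])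
next
  fix p assume "p < (2::nat)"
  show "qblk M U1 k p - qblk M U2 k p \<in> carrier_mat M M \<and> opn (qblk M U1 k p - qblk M U2 k p) M d"
    using qblk_carrier[OF U1] qblk_carrier[OF U2] o1 o2 opn_zero[OF d] minus_carrier_mat[OF U2, of U1]
      minus_carrier_mat[OF adj_carrier[OF U2], of "mat_adjoint U1"] minus_carrier_mat[OF one_carrier_mat, of "1\<^sub>m M" M]
    unfolding qblk_def by (cases k) auto
next
  fix p q m m' :: nat assume p: "p < 2" and q: "q < 2" and m: "m < M" and m': "m' < M"
  have i1: "p*M+m < 2*M" and i2: "q*M+m' < 2*M" using idx_lt[OF p m] idx_lt[OF q m'] by auto
  have c1: "query_op M U1 k \<in> carrier_mat (2*M) (2*M)" and c2: "query_op M U2 k \<in> carrier_mat (2*M) (2*M)"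
    using query_carrier[OF U1] query_carrier[OF U2] by auto
  have b1: "qblk M U1 k p \<in> carrier_mat M M" and b2: "qblk M U2 k p \<in> carrier_mat M M"
    using qblk_carrier[OF U1] qblk_carrier[OF U2] by auto
  have "(query_op M U1 k - query_op M U2 k) $$ (p*M+m, q*M+m') =
        query_op M U1 k $$ (p*M+m, q*M+m') - query_op M U2 k $$ (p*M+m, q*M+m')"
    using c1 c2 i1 i2 by simp
  also have "\<dots> = (if p = q then (qblk M U1 k p - qblk M U2 k p) $$ (m,m') else 0)"
  proof -
    have "\<And>p. dim_row (qblk M U2 k p) = M" "\<And>p. dim_col (qblk M U2 k p) = M" using qblk_carrier[OF U2] by auto
    thus ?thesis using qent[OF U1 p q m m'] qent[OF U2 p q m m'] m m' by simp
  qed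
  finally show "(query_op M U1 k - query_op M U2 k) $$ (p*M+m, q*M+m') =
     (if p = q then (qblk M U1 k p - qblk M U2 k p) $$ (m,m') else 0)" .
qed

lemma kron_ent: assumes Q: "Q \<in> carrier_mat n n" and p: "p < n" and q: "q < n" and r: "r < R" and r': "r' < R"
  shows "kron Q (1\<^sub>m R) $$ (p*R+r, q*R+r') = (if r = r' then Q $$ (p,q) else 0)"
proof -
  have dQ: "dim_row Q = n" "dim_col Q = n" using Q by auto
  have i1: "p*R+r < n*R" and i2: "q*R+r' < n*R" using idx_lt[OF p r] idx_lt[OF q r'] by auto
  show ?thesis using i1 i2 r r' by (simp add: kron_idx dQ)
qed

lemma kron_carrier: "Q \<in> carrier_mat n n \<Longrightarrow> kron Q (1\<^sub>m R) \<in> carrier_mat (n*R) (n*R)"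
proof -
  assume Q: "Q \<in> carrier_mat n n"
  hence "dim_row Q = n" "dim_col Q = n" by auto
  thus ?thesis by (auto intro!: carrier_matI)
qed

lemma kron_opn: assumes Q: "Q \<in> carrier_mat n n" and o: "opn Q n e" shows "opn (kron Q (1\<^sub>m R)) (n*R) e"
  by (rule blockS[OF kron_carrier[OF Q] Q o kron_ent[OF Q]])

lemma kron_opn_diff: assumes Q1: "Q1 \<in> carrier_mat n n" and Q2: "Q2 \<in> carrier_mat n n" and o: "opn (Q1 - Q2) n e"
  shows "opn (kron Q1 (1\<^sub>m R) - kron Q2 (1\<^sub>m R)) (n*R) e"
proof (rule blockS[where A = "Q1 - Q2"])
  show "kron Q1 (1\<^sub>m R) - kron Q2 (1\<^sub>m R) \<in> carrier_mat (n*R) (n*R)"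
    by (rule minus_carrier_mat[OF kron_carrier[OF Q2]])
  show "Q1 - Q2 \<in> carrier_mat n n" by (rule minus_carrier_mat[OF Q2])
  show "opn (Q1 - Q2) n e" by fact
next
  fix p q r r' :: nat assume p: "p < n" and q: "q < n" and r: "r < R" and r': "r' < R"
  have i1: "p*R+r < n*R" and i2: "q*R+r' < n*R" using idx_lt[OF p r] idx_lt[OF q r'] by auto
  have c1: "kron Q1 (1\<^sub>m R) \<in> carrier_mat (n*R) (n*R)" and c2: "kron Q2 (1\<^sub>m R) \<in> carrier_mat (n*R) (n*R)"
    using kron_carrier[OF Q1] kron_carrier[OF Q2] by auto
  show "(kron Q1 (1\<^sub>m R) - kron Q2 (1\<^sub>m R)) $$ (p*R+r, q*R+r') = (if r = r' then (Q1 - Q2) $$ (p,q) else 0)"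
    using c1 c2 i1 i2 kron_ent[OF Q1 p q r r'] kron_ent[OF Q2 p q r r'] Q1 Q2 p q by simp
qed


lemma nv_nonneg: "nv v \<ge> 0" unfolding nv_def by simp

lemma nv_add: assumes a: "a \<in> carrier_vec n" and b: "b \<in> carrier_vec n"
  shows "nv (a + b) \<le> nv a + nv b"
proof -
  have "nv (a + b) = L2_set (\<lambda>i. cmod ((a+b) $ i)) {..<n}" unfolding nv_def using b by simp
  also have "\<dots> \<le> L2_set (\<lambda>i. cmod (a $ i) + cmod (b $ i)) {..<n}"
    by (rule L2_set_mono) (use a b in \<open>auto intro: norm_triangle_ineq\<close>)
  also have "\<dots> \<le> L2_set (\<lambda>i. cmod (a $ i)) {..<n} + L2_set (\<lambda>i. cmod (b $ i)) {..<n}"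
    by (rule L2_set_triangle_ineq)
  also have "\<dots> = nv a + nv b" unfolding nv_def using a b by simp
  finally show ?thesis .
qed

lemma opn_nv: assumes o: "opn A n e" and e: "e \<ge> 0" and w: "w \<in> carrier_vec n"
  shows "nv (A *\<^sub>v w) \<le> e * nv w"
proof -
  have "nsq (A *\<^sub>v w) \<le> e^2 * nsq w" using o w unfolding opn_def by auto
  hence "sqrt (nsq (A *\<^sub>v w)) \<le> sqrt (e^2 * nsq w)" by (rule real_sqrt_le_mono)
  also have "\<dots> = e * sqrt (nsq w)" using e by (simp add: real_sqrt_mult)
  finally show ?thesis unfolding nv_nsq .
qed

lemma nv_zero: "nv (0\<^sub>v n) = 0" unfolding nv_nsq nsq_def by simp

lemma hybrid:
  fixes KA KB :: "qkind \<Rightarrow> complex mat"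
  assumes st: "\<And>st. st \<in> set steps \<Longrightarrow> snd st \<in> carrier_mat D D \<and> opn (snd st) D 1"
  and Vz: "Vz \<in> carrier_mat D D" "opn Vz D 1"
  and K: "\<And>k. KA k \<in> carrier_mat D D \<and> KB k \<in> carrier_mat D D \<and> opn (KA k) D 1 \<and> opn (KB k) D 1 \<and> opn (KA k - KB k) D d"
  and x: "x \<in> carrier_vec D" "nv x \<le> 1" and d: "d \<ge> 0"
  shows "foldl (\<lambda>W (k, V). V * KA k * W) Vz steps \<in> carrier_mat D D \<and>
         foldl (\<lambda>W (k, V). V * KB k * W) Vz steps \<in> carrier_mat D D \<and>
         nv (foldl (\<lambda>W (k, V). V * KA k * W) Vz steps *\<^sub>v x) \<le> 1 \<and>
         nv (foldl (\<lambda>W (k, V). V * KB k * W) Vz steps *\<^sub>v x) \<le> 1 \<and>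
         nv (foldl (\<lambda>W (k, V). V * KA k * W) Vz steps *\<^sub>v x - foldl (\<lambda>W (k, V). V * KB k * W) Vz steps *\<^sub>v x)
            \<le> real (length steps) * d"
  using st
proof (induction steps rule: rev_induct)
  case Nil
  have "nv (Vz *\<^sub>v x) \<le> 1 * nv x" by (rule opn_nv[OF Vz(2) _ x(1)]) simp
  hence n1: "nv (Vz *\<^sub>v x) \<le> 1" using x(2) by simp
  have "Vz *\<^sub>v x - Vz *\<^sub>v x = 0\<^sub>v D" using Vz(1) x(1) by (intro eq_vecI) auto
  thus ?case using Vz(1) n1 by (simp add: nv_zero)
next
  case (snoc st steps)
  obtain k V where stkv: "st = (k, V)" by (cases st)
  have IH: "foldl (\<lambda>W (k, V). V * KA k * W) Vz steps \<in> carrier_mat D D \<and>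
         foldl (\<lambda>W (k, V). V * KB k * W) Vz steps \<in> carrier_mat D D \<and>
         nv (foldl (\<lambda>W (k, V). V * KA k * W) Vz steps *\<^sub>v x) \<le> 1 \<and>
         nv (foldl (\<lambda>W (k, V). V * KB k * W) Vz steps *\<^sub>v x) \<le> 1 \<and>
         nv (foldl (\<lambda>W (k, V). V * KA k * W) Vz steps *\<^sub>v x - foldl (\<lambda>W (k, V). V * KB k * W) Vz steps *\<^sub>v x)
            \<le> real (length steps) * d"
    using snoc by auto
  define WA where "WA = foldl (\<lambda>W (k, V). V * KA k * W) Vz steps"
  define WB where "WB = foldl (\<lambda>W (k, V). V * KB k * W) Vz steps"
  have WA: "WA \<in> carrier_mat D D" and WB: "WB \<in> carrier_mat D D" using IH unfolding WA_def WB_def by auto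
  have V: "V \<in> carrier_mat D D" "opn V D 1" using snoc(2)[of st] stkv by auto
  have KA: "KA k \<in> carrier_mat D D" "opn (KA k) D 1" and KB: "KB k \<in> carrier_mat D D" "opn (KB k) D 1"
    and KD: "opn (KA k - KB k) D d" using K[of k] by auto
  define a where "a = WA *\<^sub>v x"
  define b where "b = WB *\<^sub>v x"
  have a: "a \<in> carrier_vec D" and b: "b \<in> carrier_vec D" unfolding a_def b_def using WA WB x(1) by auto
  have na: "nv a \<le> 1" and nb: "nv b \<le> 1" and nab: "nv (a - b) \<le> real (length steps) * d"
    using IH unfolding a_def b_def WA_def WB_def by auto
  have eqA: "foldl (\<lambda>W (k, V). V * KA k * W) Vz (steps @ [st]) = V * KA k * WA"
    unfolding WA_def stkv by simp
  have eqB: "foldl (\<lambda>W (k, V). V * KB k * W) Vz (steps @ [st]) = V * KB k * WB"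
    unfolding WB_def stkv by simp
  have mA: "(V * KA k * WA) *\<^sub>v x = V *\<^sub>v (KA k *\<^sub>v a)"
    unfolding a_def by (simp only: assoc_mult_mat_vec[OF mult_carrier_mat[OF V(1) KA(1)] WA x(1)]
       assoc_mult_mat_vec[OF V(1) KA(1) mult_mat_vec_carrier[OF WA x(1)]])
  have mB: "(V * KB k * WB) *\<^sub>v x = V *\<^sub>v (KB k *\<^sub>v b)"
    unfolding b_def by (simp only: assoc_mult_mat_vec[OF mult_carrier_mat[OF V(1) KB(1)] WB x(1)]
       assoc_mult_mat_vec[OF V(1) KB(1) mult_mat_vec_carrier[OF WB x(1)]])
  have cA: "V * KA k * WA \<in> carrier_mat D D" and cB: "V * KB k * WB \<in> carrier_mat D D"
    using V(1) KA(1) KB(1) WA WB by auto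
  have KAa: "KA k *\<^sub>v a \<in> carrier_vec D" and KBb: "KB k *\<^sub>v b \<in> carrier_vec D" using KA(1) KB(1) a b by auto
  have n1: "nv (V *\<^sub>v (KA k *\<^sub>v a)) \<le> 1"
  proof -
    have "nv (V *\<^sub>v (KA k *\<^sub>v a)) \<le> 1 * nv (KA k *\<^sub>v a)" by (rule opn_nv[OF V(2) _ KAa]) simp
    also have "\<dots> \<le> 1 * nv a" using opn_nv[OF KA(2) _ a] by simp
    finally show ?thesis using na by simp
  qed
  have n2: "nv (V *\<^sub>v (KB k *\<^sub>v b)) \<le> 1"
  proof -
    have "nv (V *\<^sub>v (KB k *\<^sub>v b)) \<le> 1 * nv (KB k *\<^sub>v b)" by (rule opn_nv[OF V(2) _ KBb]) simp
    also have "\<dots> \<le> 1 * nv b" using opn_nv[OF KB(2) _ b] by simp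
    finally show ?thesis using nb by simp
  qed
  have split: "KA k *\<^sub>v a - KB k *\<^sub>v b = KA k *\<^sub>v (a - b) + (KA k - KB k) *\<^sub>v b"
    using KA(1) KB(1) a b by (intro eq_vecI) (auto simp: mult_minus_distrib_mat_vec minus_mult_distrib_mat_vec)
  have c1: "KA k *\<^sub>v (a - b) \<in> carrier_vec D" using KA(1) a b by auto
  have c2: "(KA k - KB k) *\<^sub>v b \<in> carrier_vec D"
    by (rule mult_mat_vec_carrier[OF minus_carrier_mat[OF KB(1)] b])
  have n3: "nv (V *\<^sub>v (KA k *\<^sub>v a) - V *\<^sub>v (KB k *\<^sub>v b)) \<le> real (length (steps @ [st])) * d"
  proof -
    have "V *\<^sub>v (KA k *\<^sub>v a) - V *\<^sub>v (KB k *\<^sub>v b) = V *\<^sub>v (KA k *\<^sub>v a - KB k *\<^sub>v b)"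
      using V(1) KAa KBb by (simp add: mult_minus_distrib_mat_vec)
    hence "nv (V *\<^sub>v (KA k *\<^sub>v a) - V *\<^sub>v (KB k *\<^sub>v b)) \<le> 1 * nv (KA k *\<^sub>v a - KB k *\<^sub>v b)"
      using opn_nv[OF V(2) _, of "KA k *\<^sub>v a - KB k *\<^sub>v b"] KAa KBb by simp
    also have "\<dots> = nv (KA k *\<^sub>v (a - b) + (KA k - KB k) *\<^sub>v b)" using split by simp
    also have "\<dots> \<le> nv (KA k *\<^sub>v (a - b)) + nv ((KA k - KB k) *\<^sub>v b)" by (rule nv_add[OF c1 c2])
    also have "\<dots> \<le> 1 * nv (a - b) + d * nv b"
      using opn_nv[OF KA(2) _, of "a - b"] opn_nv[OF KD d b] a b by (intro add_mono) auto
    also have "\<dots> \<le> real (length steps) * d + d * 1"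
      using nab nb d by (intro add_mono mult_left_mono) auto
    finally show ?thesis by (simp add: algebra_simps)
  qed
  show ?case unfolding eqA eqB mA mB using cA cB n1 n2 n3 by simp
qed


lemma mfc: assumes ex: "\<exists>V d. spectral_dec (dim_row A) A V d"
  shows "\<exists>V d. spectral_dec (dim_row A) A V d \<and>
     (\<forall>f. mat_fun f A = V * mat_diag (dim_row A) (\<lambda>i. complex_of_real (f (d i))) * mat_adjoint V)"
proof -
  let ?P = "\<lambda>x. spectral_dec (dim_row A) A (fst x) (snd x)"
  have "\<exists>x. ?P x" using ex by auto
  hence P: "?P (SOME x. ?P x)" by (rule someI_ex)
  define x where "x = (SOME x. ?P x)"
  have eq: "(SOME (V, d). spectral_dec (dim_row A) A V d) = x"
    unfolding x_def by (simp add: case_prod_beta')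
  show ?thesis
    apply (rule exI[of _ "fst x"], rule exI[of _ "snd x"])
    using P unfolding x_def[symmetric]
    by (simp add: mat_fun_def Let_def eq split: prod.splits)
qed

lemma trace_udu: assumes V: "V \<in> carrier_mat n n" and VV: "mat_adjoint V * V = 1\<^sub>m n"
  shows "mat_trace (V * mat_diag n g * mat_adjoint V) = (\<Sum>k<n. g k)"
proof -
  have cj: "\<And>l k. l < n \<Longrightarrow> k < n \<Longrightarrow> (\<Sum>i<n. cnj (V$$(i,l)) * V$$(i,k)) = (if l = k then 1 else 0)"
  proof -
    fix l k assume l: "l < n" and k: "k < n"
    have "(mat_adjoint V * V) $$ (l,k) = (\<Sum>i<n. mat_adjoint V $$ (l,i) * V $$ (i,k))"
      by (rule mult_idx[OF adj_carrier[OF V] V l k])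
    also have "\<dots> = (\<Sum>i<n. cnj (V$$(i,l)) * V$$(i,k))" using V l by (intro sum.cong) auto
    finally show "(\<Sum>i<n. cnj (V$$(i,l)) * V$$(i,k)) = (if l = k then 1 else 0)" using VV l k by simp
  qed
  have VD: "V * mat_diag n g = mat n n (\<lambda>(i,j). V $$ (i,j) * g j)" by (rule mat_diag_mult_right[OF V])
  have c1: "V * mat_diag n g \<in> carrier_mat n n" using V by simp
  have dr: "dim_row (V * mat_diag n g * mat_adjoint V) = n" using V by simp
  have "mat_trace (V * mat_diag n g * mat_adjoint V) = (\<Sum>i<n. (V * mat_diag n g * mat_adjoint V) $$ (i,i))"
    unfolding mat_trace_def dr ..
  also have "\<dots> = (\<Sum>i<n. \<Sum>l<n. (V $$ (i,l) * g l) * cnj (V $$ (i,l)))"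
  proof (rule sum.cong[OF refl])
    fix i assume "i \<in> {..<n}" hence i: "i < n" by simp
    have "(V * mat_diag n g * mat_adjoint V) $$ (i,i) = (\<Sum>l<n. (V * mat_diag n g) $$ (i,l) * mat_adjoint V $$ (l,i))"
      by (rule mult_idx[OF c1 adj_carrier[OF V] i i])
    also have "\<dots> = (\<Sum>l<n. (V $$ (i,l) * g l) * cnj (V $$ (i,l)))"
      using V i by (intro sum.cong refl) (simp add: VD)
    finally show "(V * mat_diag n g * mat_adjoint V) $$ (i,i) = (\<Sum>l<n. (V $$ (i,l) * g l) * cnj (V $$ (i,l)))" .
  qed
  also have "\<dots> = (\<Sum>l<n. \<Sum>i<n. (V $$ (i,l) * g l) * cnj (V $$ (i,l)))" by (rule sum.swap)
  also have "\<dots> = (\<Sum>l<n. g l * (\<Sum>i<n. cnj (V $$ (i,l)) * V $$ (i,l)))"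
    by (intro sum.cong refl) (simp add: sum_distrib_left mult_ac)
  also have "\<dots> = (\<Sum>l<n. g l)" by (intro sum.cong refl) (simp add: cj)
  finally show ?thesis .
qed


lemma diag_idx: "k < n \<Longrightarrow> mat_diag n f $$ (k,k) = f k" unfolding mat_diag_def by simp

lemma adjA_A_diag: assumes X: "(X::complex mat) \<in> carrier_mat n n" and k: "k < n"
  shows "(mat_adjoint X * X) $$ (k,k) = complex_of_real (\<Sum>i<n. (cmod (X $$ (i,k)))^2)"
proof -
  have "(mat_adjoint X * X) $$ (k,k) = (\<Sum>i<n. mat_adjoint X $$ (k,i) * X $$ (i,k))"
    by (rule mult_idx[OF adj_carrier[OF X] X k k])
  also have "\<dots> = (\<Sum>i<n. complex_of_real ((cmod (X $$ (i,k)))^2))"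
  proof (rule sum.cong[OF refl])
    fix i assume "i \<in> {..<n}" hence i: "i < n" by simp
    have "mat_adjoint X $$ (k,i) * X $$ (i,k) = X $$ (i,k) * cnj (X $$ (i,k))" using X i k by simp
    also have "\<dots> = complex_of_real ((cmod (X $$ (i,k)))^2)" by (rule complex_norm_square[symmetric])
    finally show "mat_adjoint X $$ (k,i) * X $$ (i,k) = complex_of_real ((cmod (X $$ (i,k)))^2)" .
  qed
  finally show ?thesis by simp
qed

lemma tn_lower: assumes X: "X \<in> carrier_mat n n" and n: "0 < n"
  and ex: "\<exists>V d. spectral_dec n (mat_adjoint X * X) V d"
  shows "cmod (X $$ (0,0)) \<le> trace_norm X"
proof -
  define B where "B = mat_adjoint X * X"
  have B: "B \<in> carrier_mat n n" unfolding B_def by (rule mult_carrier_mat[OF adj_carrier[OF X] X])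
  have dB: "dim_row B = n" using B by simp
  obtain V d where sd: "spectral_dec n B V d"
    and mf: "\<And>f. mat_fun f B = V * mat_diag n (\<lambda>i. complex_of_real (f (d i))) * mat_adjoint V"
    using mfc[of B] ex unfolding dB unfolding B_def by blast
  have V: "V \<in> carrier_mat n n" and VV: "mat_adjoint V * V = 1\<^sub>m n" and VV': "V * mat_adjoint V = 1\<^sub>m n"
    and Bdec: "B = V * mat_diag n (\<lambda>i. complex_of_real (d i)) * mat_adjoint V"
    using sd unfolding spectral_dec_def unitary_mat_def by auto
  define D where "D = mat_diag n (\<lambda>i. complex_of_real (d i))"
  have D: "D \<in> carrier_mat n n" unfolding D_def by simp
  have Va: "mat_adjoint V \<in> carrier_mat n n" using V by simp
  have "mat_adjoint V * B * V = mat_adjoint V * (V * D * mat_adjoint V) * V" unfolding Bdec D_def ..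
  also have "\<dots> = mat_adjoint V * (V * D * mat_adjoint V * V)"
    by (rule assoc_mult_mat[OF Va mult_carrier_mat[OF mult_carrier_mat[OF V D] Va] V])
  also have "V * D * mat_adjoint V * V = V * D * (mat_adjoint V * V)"
    by (rule assoc_mult_mat[OF mult_carrier_mat[OF V D] Va V])
  also have "\<dots> = V * D" unfolding VV by (rule right_mult_one_mat[OF mult_carrier_mat[OF V D]])
  also have "mat_adjoint V * (V * D) = (mat_adjoint V * V) * D"
    by (rule assoc_mult_mat[symmetric, OF Va V D])
  also have "\<dots> = D" using D by (simp add: VV)
  finally have DD: "mat_adjoint V * B * V = D" .
  define Y where "Y = X * V"
  have Y: "Y \<in> carrier_mat n n" unfolding Y_def using X V by simp
  have Xa: "mat_adjoint X \<in> carrier_mat n n" using X by simp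
  have "mat_adjoint V * B * V = mat_adjoint V * (B * V)"
    by (rule assoc_mult_mat[OF Va B V])
  also have "B * V = mat_adjoint X * (X * V)" unfolding B_def by (rule assoc_mult_mat[OF Xa X V])
  also have "mat_adjoint V * (mat_adjoint X * (X * V)) = (mat_adjoint V * mat_adjoint X) * (X * V)"
    by (rule assoc_mult_mat[symmetric, OF Va Xa mult_carrier_mat[OF X V]])
  also have "\<dots> = mat_adjoint Y * Y" unfolding Y_def adj_mult[OF X V] ..
  finally have "mat_adjoint V * B * V = mat_adjoint Y * Y" .
  hence DY: "D = mat_adjoint Y * Y" using DD by simp
  have dk: "d k = (\<Sum>i<n. (cmod (Y $$ (i,k)))^2)" if k: "k < n" for k
  proof -
    have "complex_of_real (d k) = D $$ (k,k)" unfolding D_def using k by (simp add: diag_idx)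
    also have "\<dots> = complex_of_real (\<Sum>i<n. (cmod (Y $$ (i,k)))^2)" unfolding DY by (rule adjA_A_diag[OF Y k])
    finally show ?thesis by (simp only: of_real_eq_iff)
  qed
  have dpos: "d k \<ge> 0" if "k < n" for k using dk[OF that] by (simp add: sum_nonneg)
  have "trace_norm X = Re (mat_trace (V * mat_diag n (\<lambda>i. complex_of_real (sqrt (d i))) * mat_adjoint V))"
    unfolding trace_norm_def mat_sqrt_def B_def[symmetric] mf ..
  also have "\<dots> = (\<Sum>k<n. sqrt (d k))" by (simp add: trace_udu[OF V VV])
  finally have tn: "trace_norm X = (\<Sum>k<n. sqrt (d k))" .
  have "Re (mat_trace B) = Re (mat_trace (V * D * mat_adjoint V))" unfolding Bdec D_def ..
  also have "\<dots> = (\<Sum>k<n. d k)" unfolding D_def by (simp add: trace_udu[OF V VV])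
  finally have trB: "Re (mat_trace B) = (\<Sum>k<n. d k)" .
  have "mat_trace B = (\<Sum>k<n. B $$ (k,k))" unfolding mat_trace_def dB ..
  also have "\<dots> = (\<Sum>k<n. complex_of_real (\<Sum>i<n. (cmod (X $$ (i,k)))^2))"
    unfolding B_def by (intro sum.cong refl) (simp add: adjA_A_diag[OF X])
  finally have trB2: "Re (mat_trace B) = (\<Sum>k<n. \<Sum>i<n. (cmod (X $$ (i,k)))^2)" by simp
  have "(cmod (X $$ (0,0)))^2 \<le> (\<Sum>i<n. (cmod (X $$ (i,0)))^2)"
    using n by (intro member_le_sum) auto
  also have "\<dots> \<le> (\<Sum>k<n. \<Sum>i<n. (cmod (X $$ (i,k)))^2)"
    using n by (intro member_le_sum[where f = "\<lambda>k. \<Sum>i<n. (cmod (X $$ (i,k)))^2"]) (auto intro: sum_nonneg)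
  finally have "(cmod (X $$ (0,0)))^2 \<le> (\<Sum>k<n. d k)" using trB trB2 by simp
  hence "cmod (X $$ (0,0)) \<le> sqrt (\<Sum>k<n. d k)" by (simp add: real_le_rsqrt)
  also have "\<dots> = L2_set (\<lambda>k. sqrt (d k)) {..<n}" unfolding L2_set_def using dpos by simp
  also have "\<dots> \<le> (\<Sum>k<n. sqrt (d k))" by (rule L2_set_le_sum) (simp add: dpos)
  finally show ?thesis using tn by simp
qed


lemma real_eig2: fixes p q r :: real assumes r: "r \<ge> 0"
  shows "\<exists>\<alpha> \<beta> l1 l2. \<alpha> \<ge> 0 \<and> \<beta> \<ge> 0 \<and> \<alpha> + \<beta> = 1 \<and> p = l1*\<alpha> + l2*\<beta> \<and> q = l1*\<beta> + l2*\<alpha> \<and>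
     r = (l1 - l2) * sqrt (\<alpha>*\<beta>)"
proof -
  define h where "h = (p - q)/2"
  define t where "t = sqrt (h^2 + r^2)"
  have t0: "t \<ge> 0" unfolding t_def by simp
  have tt: "t^2 = h^2 + r^2" unfolding t_def by simp
  have ht: "\<bar>h\<bar> \<le> t" unfolding t_def by (rule real_sqrt_ge_abs1[THEN order_trans[rotated]]) (simp add: real_sqrt_le_iff)
  show ?thesis
  proof (cases "t = 0")
    case True
    hence "h^2 + r^2 = 0" using tt by simp
    hence "h = 0" "r = 0" by (auto simp: add_nonneg_eq_0_iff)
    hence pq: "p = q" "r = 0" unfolding h_def by auto
    show ?thesis by (rule exI[of _ 1], rule exI[of _ 0], rule exI[of _ p], rule exI[of _ q]) (simp add: pq)
  next
    case False
    hence tp: "t > 0" using t0 by simp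
    define \<alpha> where "\<alpha> = (t+h)/(2*t)"
    define \<beta> where "\<beta> = (t-h)/(2*t)"
    have a0: "\<alpha> \<ge> 0" unfolding \<alpha>_def using tp ht by (simp add: abs_le_iff)
    have b0: "\<beta> \<ge> 0" unfolding \<beta>_def using tp ht by (simp add: abs_le_iff)
    have ab: "\<alpha> + \<beta> = 1" unfolding \<alpha>_def \<beta>_def using tp by (simp add: field_simps)
    have ab2: "\<alpha> * \<beta> = (r/(2*t))^2" unfolding \<alpha>_def \<beta>_def using tp tt
      by (simp add: field_simps power2_eq_square)
    have sab: "sqrt (\<alpha>*\<beta>) = r/(2*t)" unfolding ab2 using r tp by simp
    show ?thesis
    proof (rule exI[of _ \<alpha>], rule exI[of _ \<beta>], rule exI[of _ "(p+q)/2 + t"], rule exI[of _ "(p+q)/2 - t"], intro conjI)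
      show "p = ((p+q)/2 + t) * \<alpha> + ((p+q)/2 - t) * \<beta>"
        unfolding \<alpha>_def \<beta>_def h_def using tp by (simp add: field_simps)
      show "q = ((p+q)/2 + t) * \<beta> + ((p+q)/2 - t) * \<alpha>"
        unfolding \<alpha>_def \<beta>_def h_def using tp by (simp add: field_simps)
      show "r = ((p+q)/2 + t - ((p+q)/2 - t)) * sqrt (\<alpha>*\<beta>)" unfolding sab using tp by simp
    qed (use a0 b0 ab in auto)
  qed
qed

lemma less2: "i < (2::nat) \<Longrightarrow> i = 0 \<or> i = 1" by auto

lemma mat2_eqI: assumes "A \<in> carrier_mat 2 2" "B \<in> carrier_mat 2 2"
  "A $$ (0,0) = B $$ (0,0)" "A $$ (0,1) = B $$ (0,1)" "A $$ (1,0) = B $$ (1,0)" "A $$ (1,1) = B $$ (1,1)"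
  shows "A = B"
proof (rule eq_matI)
  fix i j assume "i < dim_row B" "j < dim_col B"
  hence "i < 2" "j < 2" using assms by auto
  thus "A $$ (i,j) = B $$ (i,j)" using assms less2 by metis
qed (use assms in auto)

lemma prod2: assumes A: "A \<in> carrier_mat 2 2" and B: "B \<in> carrier_mat 2 2" and C: "C \<in> carrier_mat 2 2"
  and e: "A $$ (0,0) * B $$ (0,0) + A $$ (0,1) * B $$ (1,0) = C $$ (0,0)"
    "A $$ (0,0) * B $$ (0,1) + A $$ (0,1) * B $$ (1,1) = C $$ (0,1)"
    "A $$ (1,0) * B $$ (0,0) + A $$ (1,1) * B $$ (1,0) = C $$ (1,0)"
    "A $$ (1,0) * B $$ (0,1) + A $$ (1,1) * B $$ (1,1) = C $$ (1,1)"
  shows "A * B = C"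
proof (rule eq_matI)
  fix i j assume "i < dim_row C" "j < dim_col C"
  hence ij: "i < 2" "j < 2" using C by auto
  have "(A * B) $$ (i,j) = (\<Sum>l<2. A $$ (i,l) * B $$ (l,j))" by (rule mult_idx[OF A B ij])
  also have "\<dots> = A $$ (i,0) * B $$ (0,j) + A $$ (i,1) * B $$ (1,j)" by (simp add: numeral_2_eq_2)
  also have "\<dots> = C $$ (i,j)"
  proof -
    have "i = 0 \<or> i = 1" "j = 0 \<or> j = 1" using ij by auto
    thus ?thesis using e by (elim disjE) simp_all
  qed
  finally show "(A * B) $$ (i,j) = C $$ (i,j)" .
qed (use A B C in auto)

lemma mult2: assumes "A \<in> carrier_mat 2 2" "B \<in> carrier_mat 2 2" "i < 2" "j < 2"
  shows "(A * B) $$ (i,j) = A $$ (i,0) * B $$ (0,j) + A $$ (i,1) * B $$ (1,j)"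
  using mult_idx[OF assms] by (simp add: numeral_2_eq_2)


lemma herm2_spec: assumes H: "hermitian_mat 2 B" shows "\<exists>V d. spectral_dec 2 B V d"
proof -
  have B: "B \<in> carrier_mat 2 2" and adjB: "mat_adjoint B = B" using H unfolding hermitian_mat_def by auto
  have herm: "cnj (B $$ (j,i)) = B $$ (i,j)" if "i < 2" "j < 2" for i j
  proof -
    have "mat_adjoint B $$ (i,j) = cnj (B $$ (j,i))" using B that by simp
    thus ?thesis using adjB by simp
  qed
  define p where "p = Re (B $$ (0,0))"
  define q where "q = Re (B $$ (1,1))"
  define z where "z = B $$ (0,Suc 0)"
  define r where "r = cmod z"
  define \<phi> where "\<phi> = (if z = 0 then 1 else z / complex_of_real r)"
  have B00: "B $$ (0,0) = complex_of_real p"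
    unfolding p_def using herm[of 0 0] by (simp add: complex_eq_iff)
  have B11: "B $$ (Suc 0,Suc 0) = complex_of_real q"
    unfolding q_def using herm[of 1 1] by (simp add: complex_eq_iff)
  have B10: "B $$ (Suc 0,0) = cnj z" unfolding z_def using herm[of 1 0] by simp
  have r0: "r \<ge> 0" unfolding r_def by simp
  have phi0: "\<phi> \<noteq> 0" unfolding \<phi>_def r_def by auto
  have zphi: "z = complex_of_real r * \<phi>" unfolding \<phi>_def r_def by auto
  have cphi: "cnj \<phi> = 1 / \<phi>"
  proof (cases "z = 0")
    case True thus ?thesis unfolding \<phi>_def by simp
  next
    case False
    hence "cmod \<phi> = 1" unfolding \<phi>_def r_def by (simp add: norm_divide)
    hence "\<phi> * cnj \<phi> = 1" by (simp add: complex_norm_square[symmetric])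
    thus ?thesis using phi0 by (simp add: field_simps)
  qed
  obtain \<alpha> \<beta> l1 l2 where a0: "\<alpha> \<ge> 0" and b0: "\<beta> \<ge> 0" and ab: "\<alpha> + \<beta> = 1"
    and hp: "p = l1*\<alpha> + l2*\<beta>" and hq: "q = l1*\<beta> + l2*\<alpha>" and hr: "r = (l1 - l2) * sqrt (\<alpha>*\<beta>)"
    using real_eig2[OF r0, of p q] by blast
  define a where "a = sqrt \<alpha>"
  define b where "b = sqrt \<beta>"
  have aa: "a*a = \<alpha>" unfolding a_def using a0 by simp
  have bb: "b*b = \<beta>" unfolding b_def using b0 by simp
  have ab1: "a*a + b*b = 1" using aa bb ab by simp
  have hr': "r = (l1 - l2) * (a * b)" unfolding hr a_def b_def by (simp add: real_sqrt_mult)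
  have hp': "p = l1*(a*a) + l2*(b*b)" using hp aa bb by simp
  have hq': "q = l1*(b*b) + l2*(a*a)" using hq aa bb by simp
  have cab1: "complex_of_real a * complex_of_real a + complex_of_real b * complex_of_real b = 1"
    using arg_cong[OF ab1, of complex_of_real] by simp
  have cr: "complex_of_real r = (complex_of_real l1 - complex_of_real l2) * (complex_of_real a * complex_of_real b)"
    using arg_cong[OF hr', of complex_of_real] by simp
  have cp: "complex_of_real p = complex_of_real l1 * (complex_of_real a * complex_of_real a) + complex_of_real l2 * (complex_of_real b * complex_of_real b)"
    using arg_cong[OF hp', of complex_of_real] by simp
  have cq: "complex_of_real q = complex_of_real l1 * (complex_of_real b * complex_of_real b) + complex_of_real l2 * (complex_of_real a * complex_of_real a)"
    using arg_cong[OF hq', of complex_of_real] by simp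
  define A where "A = complex_of_real a"
  define Bb where "Bb = complex_of_real b"
  define L1 where "L1 = complex_of_real l1"
  define L2 where "L2 = complex_of_real l2"
  define V where "V = mat 2 2 (\<lambda>(i,j). if i = 0 then (if j = 0 then \<phi> * A else \<phi> * Bb) else (if j = 0 then Bb else - A))"
  define d where "d = (\<lambda>i::nat. if i = 0 then l1 else l2)"
  have V: "V \<in> carrier_mat 2 2" unfolding V_def by simp
  have Va: "mat_adjoint V \<in> carrier_mat 2 2" using V by simp
  have Vi: "V $$ (0,0) = \<phi> * A" "V $$ (0,Suc 0) = \<phi> * Bb" "V $$ (Suc 0,0) = Bb" "V $$ (Suc 0,Suc 0) = - A"
    unfolding V_def by simp_all
  have Vai: "mat_adjoint V $$ (0,0) = cnj \<phi> * A" "mat_adjoint V $$ (0,Suc 0) = Bb"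
     "mat_adjoint V $$ (Suc 0,0) = cnj \<phi> * Bb" "mat_adjoint V $$ (Suc 0,Suc 0) = - A"
    using V by (simp_all add: Vi A_def Bb_def)
  have cAB: "A * A + Bb * Bb = 1" using cab1 unfolding A_def Bb_def .
  have cjr: "cnj A = A" "cnj Bb = Bb" "cnj L1 = L1" "cnj L2 = L2" unfolding A_def Bb_def L1_def L2_def by simp_all
  have U1: "V * mat_adjoint V = 1\<^sub>m 2"
    by (rule prod2) (use V Va cAB cphi phi0 in \<open>simp_all add: Vi Vai field_simps\<close>)
  have U2: "mat_adjoint V * V = 1\<^sub>m 2"
    by (rule prod2) (use V Va cAB cphi phi0 in \<open>simp_all add: Vi Vai field_simps\<close>)
  define Dg where "Dg = mat_diag 2 (\<lambda>i. complex_of_real (d i))"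
  have Dg: "Dg \<in> carrier_mat 2 2" unfolding Dg_def by simp
  have VD: "V * Dg \<in> carrier_mat 2 2" using V Dg by simp
  have VDi0: "(V * Dg) $$ (i,j) = V $$ (i,j) * complex_of_real (d j)" if "i < 2" "j < 2" for i j
    unfolding Dg_def using mat_diag_mult_right[OF V] that by simp
  have VDi: "(V * Dg) $$ (0,0) = \<phi> * A * L1" "(V * Dg) $$ (0,Suc 0) = \<phi> * Bb * L2"
    "(V * Dg) $$ (Suc 0,0) = Bb * L1" "(V * Dg) $$ (Suc 0,Suc 0) = - A * L2"
    using VDi0[of 0 0] VDi0[of 0 1] VDi0[of 1 0] VDi0[of 1 1] by (simp_all add: Vi d_def L1_def L2_def)
  have cp': "complex_of_real p = L1 * (A * A) + L2 * (Bb * Bb)" using cp unfolding L1_def L2_def A_def Bb_def .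
  have cq': "complex_of_real q = L1 * (Bb * Bb) + L2 * (A * A)" using cq unfolding L1_def L2_def A_def Bb_def .
  have cr': "complex_of_real r = (L1 - L2) * (A * Bb)" using cr unfolding L1_def L2_def A_def Bb_def .
  have dec: "V * Dg * mat_adjoint V = B"
    by (rule prod2[OF VD Va B]) (use cphi phi0 in \<open>simp_all add: VDi Vai B00 B10 B11 cp' cq' z_def[symmetric] zphi cr' cjr field_simps\<close>)
  show ?thesis unfolding spectral_dec_def unitary_mat_def
    by (rule exI[of _ V], rule exI[of _ d]) (use V U1 U2 dec[symmetric] in \<open>simp add: Dg_def\<close>)
qed


definition dg :: "real \<Rightarrow> real \<Rightarrow> complex mat" where
  "dg x y = mat_diag 2 (\<lambda>i. if i = 0 then complex_of_real x else complex_of_real y)"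

lemma dg_carrier[simp]: "dg x y \<in> carrier_mat 2 2" unfolding dg_def by simp
lemma dg_dim[simp]: "dim_row (dg x y) = 2" "dim_col (dg x y) = 2" unfolding dg_def mat_diag_def by simp_all
lemma dg_idx: "i < 2 \<Longrightarrow> j < 2 \<Longrightarrow> dg x y $$ (i,j) = (if i = j then (if i = 0 then complex_of_real x else complex_of_real y) else 0)"
  unfolding dg_def mat_diag_def by simp

lemma udu_entry: assumes V: "V \<in> carrier_mat n n" and i: "i < n" and j: "j < n"
  shows "(V * mat_diag n g * mat_adjoint V) $$ (i,j) = (\<Sum>k<n. V $$ (i,k) * g k * cnj (V $$ (j,k)))"
proof -
  have VD: "V * mat_diag n g = mat n n (\<lambda>(i,j). V $$ (i,j) * g j)" by (rule mat_diag_mult_right[OF V])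
  have c1: "V * mat_diag n g \<in> carrier_mat n n" using V by simp
  have "(V * mat_diag n g * mat_adjoint V) $$ (i,j) = (\<Sum>k<n. (V * mat_diag n g) $$ (i,k) * mat_adjoint V $$ (k,j))"
    by (rule mult_idx[OF c1 adj_carrier[OF V] i j])
  also have "\<dots> = (\<Sum>k<n. V $$ (i,k) * g k * cnj (V $$ (j,k)))"
    using V i j by (intro sum.cong refl) (simp add: VD)
  finally show ?thesis .
qed

lemma uu_entry: assumes V: "V \<in> carrier_mat n n" and i: "i < n" and j: "j < n"
  shows "(V * mat_adjoint V) $$ (i,j) = (\<Sum>k<n. V $$ (i,k) * cnj (V $$ (j,k)))"
proof -
  have "(V * mat_adjoint V) $$ (i,j) = (\<Sum>k<n. V $$ (i,k) * mat_adjoint V $$ (k,j))"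
    by (rule mult_idx[OF V adj_carrier[OF V] i j])
  also have "\<dots> = (\<Sum>k<n. V $$ (i,k) * cnj (V $$ (j,k)))" using V i j by (intro sum.cong refl) simp
  finally show ?thesis .
qed

lemma adj_one: "mat_adjoint (1\<^sub>m n :: complex mat) = 1\<^sub>m n"
  by (rule eq_matI) auto

lemma dg_spec: "spectral_dec 2 (dg x y) (1\<^sub>m 2) (\<lambda>i. if i = 0 then x else y)"
proof -
  have e: "mat_diag 2 (\<lambda>i. complex_of_real (if i = 0 then x else y)) = dg x y"
    unfolding dg_def by (rule arg_cong[where f = "mat_diag 2"]) auto
  show ?thesis unfolding spectral_dec_def unitary_mat_def adj_one e
    by (simp add: left_mult_one_mat[OF dg_carrier] right_mult_one_mat[OF dg_carrier])
qed

lemma mf_dg: assumes xy: "x \<noteq> y" shows "mat_fun f (dg x y) = dg (f x) (f y)"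
proof -
  have ex: "\<exists>V d. spectral_dec (dim_row (dg x y)) (dg x y) V d" using dg_spec by auto
  obtain V d where sd: "spectral_dec 2 (dg x y) V d"
    and mf: "\<And>f. mat_fun f (dg x y) = V * mat_diag 2 (\<lambda>i. complex_of_real (f (d i))) * mat_adjoint V"
    using mfc[OF ex] by auto
  have V: "V \<in> carrier_mat 2 2" and VV: "mat_adjoint V * V = 1\<^sub>m 2" and VV': "V * mat_adjoint V = 1\<^sub>m 2"
    and dec: "dg x y = V * mat_diag 2 (\<lambda>i. complex_of_real (d i)) * mat_adjoint V"
    using sd unfolding spectral_dec_def unitary_mat_def by auto
  define D where "D = mat_diag 2 (\<lambda>i. complex_of_real (d i))"
  have D: "D \<in> carrier_mat 2 2" unfolding D_def by simp
  have Va: "mat_adjoint V \<in> carrier_mat 2 2" using V by simp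
  have dV: "dim_row V = 2" "dim_col V = 2" using V by auto
  define h where "h = (\<lambda>i::nat. if i = 0 then x else y)"
  have HV: "dg x y * V = V * D"
  proof -
    have "dg x y * V = V * D * mat_adjoint V * V" unfolding dec D_def ..
    also have "\<dots> = V * D * (mat_adjoint V * V)" by (rule assoc_mult_mat[OF mult_carrier_mat[OF V D] Va V])
    also have "\<dots> = V * D" unfolding VV by (rule right_mult_one_mat[OF mult_carrier_mat[OF V D]])
    finally show ?thesis .
  qed
  have eig: "V $$ (i,k) = 0 \<or> d k = h i" if i: "i < 2" and k: "k < 2" for i k
  proof -
    have "(dg x y * V) $$ (i,k) = complex_of_real (h i) * V $$ (i,k)"
      unfolding dg_def using mat_diag_mult_left[OF V] i k by (simp add: h_def)
    moreover have "(V * D) $$ (i,k) = V $$ (i,k) * complex_of_real (d k)"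
      unfolding D_def using mat_diag_mult_right[OF V] i k by simp
    ultimately show ?thesis using HV by (auto simp: algebra_simps)
  qed
  have dk: "d k = x \<or> d k = y" if k: "k < 2" for k
  proof -
    have "(mat_adjoint V * V) $$ (k,k) = (\<Sum>i<2. mat_adjoint V $$ (k,i) * V $$ (i,k))"
      by (rule mult_idx[OF Va V k k])
    hence s: "(\<Sum>i<2. cnj (V $$ (i,k)) * V $$ (i,k)) = 1" using VV k V by simp
    have "\<exists>i<2. V $$ (i,k) \<noteq> 0"
    proof (rule ccontr)
      assume "\<not> ?thesis"
      hence "\<forall>i<2. V $$ (i,k) = 0" by simp
      hence "(\<Sum>i<2. cnj (V $$ (i,k)) * V $$ (i,k)) = 0" by simp
      thus False using s by simp
    qed
    then obtain i where i: "i < 2" and nz: "V $$ (i,k) \<noteq> 0" by blast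
    have "d k = h i" using eig[OF i k] nz by simp
    thus ?thesis unfolding h_def by auto
  qed
  define \<gamma> where "\<gamma> = (f y - f x) / (y - x)"
  define \<alpha> where "\<alpha> = f x - \<gamma> * x"
  have fx: "f x = \<alpha> + \<gamma> * x" unfolding \<alpha>_def by simp
  have g1: "\<gamma> * (y - x) = f y - f x" unfolding \<gamma>_def using xy by simp
  have fy: "f y = \<alpha> + \<gamma> * y" unfolding \<alpha>_def using g1 by (simp add: algebra_simps)
  have fg: "f (d k) = \<alpha> + \<gamma> * d k" if "k < 2" for k
    using dk[OF that] fx fy by auto
  have MF: "mat_fun f (dg x y) $$ (i,j) = complex_of_real \<alpha> * (if i = j then 1 else 0) + complex_of_real \<gamma> * dg x y $$ (i,j)"
    if i: "i < 2" and j: "j < 2" for i j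
  proof -
    have "mat_fun f (dg x y) $$ (i,j) = (\<Sum>k<2. V $$ (i,k) * complex_of_real (f (d k)) * cnj (V $$ (j,k)))"
      unfolding mf by (rule udu_entry[OF V i j])
    also have "\<dots> = (\<Sum>k<2. complex_of_real \<alpha> * (V $$ (i,k) * cnj (V $$ (j,k))) +
         complex_of_real \<gamma> * (V $$ (i,k) * complex_of_real (d k) * cnj (V $$ (j,k))))"
      by (intro sum.cong refl) (simp add: fg algebra_simps)
    also have "\<dots> = complex_of_real \<alpha> * (\<Sum>k<2. V $$ (i,k) * cnj (V $$ (j,k))) +
         complex_of_real \<gamma> * (\<Sum>k<2. V $$ (i,k) * complex_of_real (d k) * cnj (V $$ (j,k)))"
      by (simp add: sum.distrib sum_distrib_left)
    also have "(\<Sum>k<2. V $$ (i,k) * cnj (V $$ (j,k))) = (if i = j then 1 else 0)"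
      using uu_entry[OF V i j] VV' i j by (simp add: dV)
    also have "(\<Sum>k<2. V $$ (i,k) * complex_of_real (d k) * cnj (V $$ (j,k))) = dg x y $$ (i,j)"
      unfolding dec by (rule udu_entry[OF V i j, symmetric])
    finally show ?thesis .
  qed
  show ?thesis
  proof (rule eq_matI)
    fix i j assume "i < dim_row (dg (f x) (f y))" "j < dim_col (dg (f x) (f y))"
    hence i: "i < 2" and j: "j < 2" by auto
    show "mat_fun f (dg x y) $$ (i,j) = dg (f x) (f y) $$ (i,j)"
      unfolding MF[OF i j] using i j by (simp add: dg_idx fx fy)
  qed (simp_all add: mf dV)
qed


definition Ub :: "real \<Rightarrow> real \<Rightarrow> complex mat" where
 "Ub c0 c1 = mat 4 4 (\<lambda>(i,j). complex_of_real (if i mod 2 \<noteq> j mod 2 then 0 else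
    (if i < 2 \<and> j < 2 then (if i mod 2 = 0 then c0 else c1)
     else if 2 \<le> i \<and> 2 \<le> j then - (if i mod 2 = 0 then c0 else c1)
     else sqrt (1 - (if i mod 2 = 0 then c0 else c1)^2))))"

lemma Ub_carrier[simp]: "Ub c0 c1 \<in> carrier_mat 4 4" unfolding Ub_def by simp
lemma Ub_dim[simp]: "dim_row (Ub c0 c1) = 4" "dim_col (Ub c0 c1) = 4" unfolding Ub_def by simp_all

lemma less4: "i < (4::nat) \<Longrightarrow> i = 0 \<or> i = 1 \<or> i = 2 \<or> i = 3" by auto

lemma sum4: "(\<Sum>k<4::nat. f k) = f 0 + f 1 + f 2 + f 3"
  by (simp add: eval_nat_numeral)

lemma Ub_idx: "i < 4 \<Longrightarrow> j < 4 \<Longrightarrow> Ub c0 c1 $$ (i,j) = complex_of_real (if i mod 2 \<noteq> j mod 2 then 0 else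
    (if i < 2 \<and> j < 2 then (if i mod 2 = 0 then c0 else c1)
     else if 2 \<le> i \<and> 2 \<le> j then - (if i mod 2 = 0 then c0 else c1)
     else sqrt (1 - (if i mod 2 = 0 then c0 else c1)^2)))"
  unfolding Ub_def by simp

lemma Ub_vals: "Ub c0 c1 $$ (0,0) = complex_of_real c0" "Ub c0 c1 $$ (0,1) = 0" "Ub c0 c1 $$ (0,2) = complex_of_real (sqrt (1 - c0^2))" "Ub c0 c1 $$ (0,3) = 0"
  "Ub c0 c1 $$ (1,0) = 0" "Ub c0 c1 $$ (1,1) = complex_of_real c1" "Ub c0 c1 $$ (1,2) = 0" "Ub c0 c1 $$ (1,3) = complex_of_real (sqrt (1 - c1^2))"
  "Ub c0 c1 $$ (2,0) = complex_of_real (sqrt (1 - c0^2))" "Ub c0 c1 $$ (2,1) = 0" "Ub c0 c1 $$ (2,2) = - complex_of_real c0" "Ub c0 c1 $$ (2,3) = 0"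
  "Ub c0 c1 $$ (3,0) = 0" "Ub c0 c1 $$ (3,1) = complex_of_real (sqrt (1 - c1^2))" "Ub c0 c1 $$ (3,2) = 0" "Ub c0 c1 $$ (3,3) = - complex_of_real c1"
  by (simp_all add: Ub_idx)

lemma Ub_adj: "mat_adjoint (Ub c0 c1) = Ub c0 c1"
proof (rule eq_matI)
  fix i j assume "i < dim_row (Ub c0 c1)" "j < dim_col (Ub c0 c1)"
  hence i: "i < 4" and j: "j < 4" by auto
  show "mat_adjoint (Ub c0 c1) $$ (i,j) = Ub c0 c1 $$ (i,j)"
    using i j by (simp add: Ub_idx)
qed simp_all

lemma Ub_sq: assumes c0: "c0^2 \<le> 1" and c1: "c1^2 \<le> 1" shows "Ub c0 c1 * Ub c0 c1 = 1\<^sub>m 4"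
proof (rule eq_matI)
  have s0: "sqrt (1 - c0^2) * sqrt (1 - c0^2) = 1 - c0^2" using c0 by simp
  have s1: "sqrt (1 - c1^2) * sqrt (1 - c1^2) = 1 - c1^2" using c1 by simp
  have a0: "\<bar>1 - c0 * c0\<bar> = 1 - c0 * c0" using c0 by (simp add: power2_eq_square)
  have a1: "\<bar>1 - c1 * c1\<bar> = 1 - c1 * c1" using c1 by (simp add: power2_eq_square)
  fix i j assume "i < dim_row (1\<^sub>m 4 :: complex mat)" "j < dim_col (1\<^sub>m 4 :: complex mat)"
  hence i: "i < 4" and j: "j < 4" by auto
  have "(Ub c0 c1 * Ub c0 c1) $$ (i,j) = (\<Sum>k<4. Ub c0 c1 $$ (i,k) * Ub c0 c1 $$ (k,j))"
    by (rule mult_idx[OF Ub_carrier Ub_carrier i j])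
  also have "\<dots> = Ub c0 c1 $$ (i,0) * Ub c0 c1 $$ (0,j) + Ub c0 c1 $$ (i,1) * Ub c0 c1 $$ (1,j)
     + Ub c0 c1 $$ (i,2) * Ub c0 c1 $$ (2,j) + Ub c0 c1 $$ (i,3) * Ub c0 c1 $$ (3,j)" by (rule sum4)
  also have "\<dots> = (1\<^sub>m 4 :: complex mat) $$ (i,j)"
    using less4[OF i] less4[OF j] 
    by (elim disjE) (simp_all only: Ub_vals, simp_all add: s0 s1 a0 a1 power2_eq_square flip: of_real_mult of_real_add)
  finally show "(Ub c0 c1 * Ub c0 c1) $$ (i,j) = (1\<^sub>m 4 :: complex mat) $$ (i,j)" .
qed simp_all

lemma Ub_unitary: "c0^2 \<le> 1 \<Longrightarrow> c1^2 \<le> 1 \<Longrightarrow> unitary_mat 4 (Ub c0 c1)"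
  unfolding unitary_mat_def Ub_adj using Ub_sq by simp


lemma Ub_vals1: "Ub c0 c1 $$ (0,Suc 0) = 0" "Ub c0 c1 $$ (Suc 0,0) = 0" "Ub c0 c1 $$ (Suc 0,Suc 0) = complex_of_real c1"
  "Ub c0 c1 $$ (Suc 0,2) = 0" "Ub c0 c1 $$ (Suc 0,3) = complex_of_real (sqrt (1 - c1^2))"
  "Ub c0 c1 $$ (2,Suc 0) = 0" "Ub c0 c1 $$ (3,Suc 0) = complex_of_real (sqrt (1 - c1^2))"
  by (simp_all add: Ub_idx)

lemma cm_id: fixes a b :: real and u v :: complex
  shows "(cmod (complex_of_real a * u + complex_of_real b * v))^2 + (cmod (complex_of_real b * u - complex_of_real a * v))^2
    = (a^2 + b^2) * ((cmod u)^2 + (cmod v)^2)"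
  by (simp only: cmod_power2) (simp add: power2_eq_square algebra_simps)

lemma vec4: assumes "A \<in> carrier_mat 4 4" "w \<in> carrier_vec 4" "i < 4"
  shows "(A *\<^sub>v w) $ i = A $$ (i,0) * w $ 0 + A $$ (i,1) * w $ 1 + A $$ (i,2) * w $ 2 + A $$ (i,3) * w $ 3"
  using mult_vec_idx[OF assms] by (simp add: sum4)

lemma nsq4: "w \<in> carrier_vec 4 \<Longrightarrow> nsq w = (cmod (w$0))^2 + (cmod (w$1))^2 + (cmod (w$2))^2 + (cmod (w$3))^2"
  unfolding nsq_def by (simp add: sum4)

lemma Ub_diff: fixes c0 c1 e :: real
  defines "dd \<equiv> c0 - c1" and "tt \<equiv> sqrt (1 - c0^2) - sqrt (1 - c1^2)"
  assumes e: "dd^2 + tt^2 \<le> e^2"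
  shows "opn (Ub c0 c1 - Ub c1 c0) 4 e"
  unfolding opn_def
proof
  fix w :: "complex vec" assume w: "w \<in> carrier_vec 4"
  define A where "A = Ub c0 c1 - Ub c1 c0"
  have A: "A \<in> carrier_mat 4 4" unfolding A_def by (rule minus_carrier_mat[OF Ub_carrier])
  have Ai: "A $$ (i,j) = Ub c0 c1 $$ (i,j) - Ub c1 c0 $$ (i,j)" if "i < 4" "j < 4" for i j
    unfolding A_def using that by simp
  have r0: "(A *\<^sub>v w) $ 0 = complex_of_real dd * w$0 + complex_of_real tt * w$2"
    using vec4[OF A w, of 0] Ai by (simp add: Ub_vals Ub_vals1 dd_def tt_def)
  have r2: "(A *\<^sub>v w) $ 2 = complex_of_real tt * w$0 - complex_of_real dd * w$2"
    using vec4[OF A w, of 2] Ai by (simp add: Ub_vals Ub_vals1 dd_def tt_def algebra_simps)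
  have r1: "(A *\<^sub>v w) $ 1 = - (complex_of_real dd * w$1 + complex_of_real tt * w$3)"
    using vec4[OF A w, of 1] Ai by (simp add: Ub_vals Ub_vals1 dd_def tt_def algebra_simps)
  have r3: "(A *\<^sub>v w) $ 3 = - (complex_of_real tt * w$1 - complex_of_real dd * w$3)"
    using vec4[OF A w, of 3] Ai by (simp add: Ub_vals Ub_vals1 dd_def tt_def algebra_simps)
  have "nsq (A *\<^sub>v w) = (cmod ((A *\<^sub>v w)$0))^2 + (cmod ((A *\<^sub>v w)$1))^2 + (cmod ((A *\<^sub>v w)$2))^2 + (cmod ((A *\<^sub>v w)$3))^2"
    using A w by (simp add: nsq4)
  also have "\<dots> = ((cmod (complex_of_real dd * w$0 + complex_of_real tt * w$2))^2 + (cmod (complex_of_real tt * w$0 - complex_of_real dd * w$2))^2)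
     + ((cmod (complex_of_real dd * w$1 + complex_of_real tt * w$3))^2 + (cmod (complex_of_real tt * w$1 - complex_of_real dd * w$3))^2)"
    unfolding r0 r1 r2 r3 norm_minus_cancel by simp
  also have "\<dots> = (dd^2 + tt^2) * nsq w" unfolding cm_id using w by (simp add: nsq4 algebra_simps)
  also have "\<dots> \<le> e^2 * nsq w" using e nsq_nonneg[of w] by (intro mult_right_mono) auto
  finally show "nsq ((Ub c0 c1 - Ub c1 c0) *\<^sub>v w) \<le> e^2 * nsq w" unfolding A_def .
qed


lemma L2_sq: "(L2_set f A)^2 = (\<Sum>i\<in>A. (f i)^2)"
  unfolding L2_set_def by (simp add: sum_nonneg)

lemma out_diff: assumes p1: "\<psi>1 \<in> carrier_vec D" and p2: "\<psi>2 \<in> carrier_vec D" and S: "S \<le> D"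
  and n1: "nv \<psi>1 \<le> 1" and n2: "nv \<psi>2 \<le> 1"
  shows "cmod ((\<Sum>s<S. \<psi>1 $ s * cnj (\<psi>1 $ s)) - (\<Sum>s<S. \<psi>2 $ s * cnj (\<psi>2 $ s))) \<le> 2 * nv (\<psi>1 - \<psi>2)"
proof -
  define P where "P = L2_set (\<lambda>i. cmod (\<psi>1 $ i)) {..<S}"
  define Q where "Q = L2_set (\<lambda>i. cmod (\<psi>2 $ i)) {..<S}"
  define E where "E = L2_set (\<lambda>i. cmod ((\<psi>1 - \<psi>2) $ i)) {..<S}"
  have sub: "L2_set f {..<S} \<le> L2_set f {..<D}" for f :: "nat \<Rightarrow> real"
    unfolding L2_set_def using S by (intro real_sqrt_le_mono sum_mono2) auto
  have PE: "P \<le> E + Q"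
  proof -
    have "P \<le> L2_set (\<lambda>i. cmod ((\<psi>1 - \<psi>2) $ i) + cmod (\<psi>2 $ i)) {..<S}"
      unfolding P_def
    proof (rule L2_set_mono)
      fix i assume "i \<in> {..<S}" hence i: "i < D" using S by auto
      have "\<psi>1 $ i = (\<psi>1 - \<psi>2) $ i + \<psi>2 $ i" using p1 p2 i by simp
      thus "cmod (\<psi>1 $ i) \<le> cmod ((\<psi>1 - \<psi>2) $ i) + cmod (\<psi>2 $ i)" by (metis norm_triangle_ineq)
    qed simp
    also have "\<dots> \<le> E + Q" unfolding E_def Q_def by (rule L2_set_triangle_ineq)
    finally show ?thesis .
  qed
  have QE: "Q \<le> E + P"
  proof -
    have "Q \<le> L2_set (\<lambda>i. cmod ((\<psi>1 - \<psi>2) $ i) + cmod (\<psi>1 $ i)) {..<S}"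
      unfolding Q_def
    proof (rule L2_set_mono)
      fix i assume "i \<in> {..<S}" hence i: "i < D" using S by auto
      have "\<psi>2 $ i = \<psi>1 $ i - (\<psi>1 - \<psi>2) $ i" using p1 p2 i by simp
      hence "cmod (\<psi>2 $ i) \<le> cmod (\<psi>1 $ i) + cmod ((\<psi>1 - \<psi>2) $ i)" by (metis norm_triangle_ineq4)
      thus "cmod (\<psi>2 $ i) \<le> cmod ((\<psi>1 - \<psi>2) $ i) + cmod (\<psi>1 $ i)" by simp
    qed simp
    also have "\<dots> \<le> E + P" unfolding E_def P_def by (rule L2_set_triangle_ineq)
    finally show ?thesis .
  qed
  have dd: "dim_vec (\<psi>1 - \<psi>2) = D" using p2 by simp
  have En: "E \<le> nv (\<psi>1 - \<psi>2)" unfolding E_def nv_def dd by (rule sub)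
  have P1: "P \<le> 1" using sub[of "\<lambda>i. cmod (\<psi>1 $ i)"] n1 p1 unfolding P_def nv_def by simp
  have Q1: "Q \<le> 1" using sub[of "\<lambda>i. cmod (\<psi>2 $ i)"] n2 p2 unfolding Q_def nv_def by simp
  have P0: "P \<ge> 0" and Q0: "Q \<ge> 0" unfolding P_def Q_def by simp_all
  have sP: "(\<Sum>s<S. \<psi>1 $ s * cnj (\<psi>1 $ s)) = complex_of_real (P^2)"
    unfolding P_def L2_sq of_real_sum by (intro sum.cong refl) (rule complex_norm_square[symmetric])
  have sQ: "(\<Sum>s<S. \<psi>2 $ s * cnj (\<psi>2 $ s)) = complex_of_real (Q^2)"
    unfolding Q_def L2_sq of_real_sum by (intro sum.cong refl) (rule complex_norm_square[symmetric])
  have e: "P^2 - Q^2 = (P - Q) * (P + Q)" by (simp add: power2_eq_square algebra_simps)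
  have "\<bar>P^2 - Q^2\<bar> = \<bar>P - Q\<bar> * (P + Q)" unfolding e abs_mult using P0 Q0 by simp
  also have "\<dots> \<le> E * 2" using PE QE P1 Q1 P0 Q0 by (intro mult_mono) auto
  finally have "\<bar>P^2 - Q^2\<bar> \<le> E * 2" .
  moreover have "cmod (complex_of_real (P^2) - complex_of_real (Q^2)) = \<bar>P^2 - Q^2\<bar>"
    by (simp only: of_real_diff[symmetric] norm_of_real)
  ultimately show ?thesis unfolding sP sQ using En by simp
qed

lemma dg_adj: "mat_adjoint (dg x y) = dg x y"
  by (rule eq_matI) (auto simp: dg_idx)

lemma dg_psd: assumes x: "x \<ge> 0" and y: "y \<ge> 0" shows "psd_mat 2 (dg x y)"
  unfolding psd_mat_def hermitian_mat_def
proof (intro conjI ballI)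
  show "dg x y \<in> carrier_mat 2 2" by simp
  show "mat_adjoint (dg x y) = dg x y" by (rule dg_adj)
  fix v :: "complex vec" assume v: "v \<in> carrier_vec 2"
  have e: "(dg x y *\<^sub>v v) $ i = (if i = 0 then complex_of_real x else complex_of_real y) * v $ i" if "i < 2" for i
  proof -
    have "(dg x y *\<^sub>v v) $ i = (\<Sum>l<2. dg x y $$ (i,l) * v $ l)" by (rule mult_vec_idx[OF dg_carrier v that])
    also have "\<dots> = (if i = 0 then complex_of_real x else complex_of_real y) * v $ i"
      using less2[OF that] by (elim disjE) (simp_all add: dg_idx numeral_2_eq_2)
    finally show ?thesis .
  qed
  have "conjugate v \<bullet> (dg x y *\<^sub>v v) = (\<Sum>i\<in>{0..<2}. cnj (v $ i) * (dg x y *\<^sub>v v) $ i)"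
    unfolding scalar_prod_def using v by simp
  also have "\<dots> = cnj (v $ 0) * (complex_of_real x * v $ 0) + cnj (v $ 1) * (complex_of_real y * v $ 1)"
    using e[of 0] e[of 1] by (simp add: numeral_2_eq_2)
  finally have "Re (conjugate v \<bullet> (dg x y *\<^sub>v v)) = x * ((Re (v$0))^2 + (Im (v$0))^2) + y * ((Re (v$1))^2 + (Im (v$1))^2)"
    by (simp add: power2_eq_square algebra_simps)
  thus "Re (conjugate v \<bullet> (dg x y *\<^sub>v v)) \<ge> 0" using x y by simp
qed

lemma sqrt_dg: "x \<noteq> y \<Longrightarrow> mat_sqrt (dg x y) = dg (sqrt x) (sqrt y)"
  unfolding mat_sqrt_def by (rule mf_dg)

lemma gibbs_dg: assumes "x \<noteq> y"
  shows "gibbs_state \<beta> (dg x y) $$ (0,0) = complex_of_real (exp (-\<beta>*x) / (exp (-\<beta>*x) + exp (-\<beta>*y)))"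
proof -
  have G: "mat_fun (\<lambda>t. exp (-\<beta>*t)) (dg x y) = dg (exp (-\<beta>*x)) (exp (-\<beta>*y))" by (rule mf_dg[OF assms])
  have tr: "mat_trace (dg (exp (-\<beta>*x)) (exp (-\<beta>*y))) = complex_of_real (exp (-\<beta>*x) + exp (-\<beta>*y))"
    unfolding mat_trace_def by (simp add: dg_idx numeral_2_eq_2)
  show ?thesis unfolding gibbs_state_def Let_def G tr by (simp add: dg_idx)
qed

lemma be_dg: assumes "0 \<le> x" "x \<le> 1" "0 \<le> y" "y \<le> 1"
  shows "block_encoding 2 4 (dg (sqrt x) (sqrt y)) (Ub (sqrt x) (sqrt y))"
  unfolding block_encoding_def
proof (intro conjI allI impI)
  show "unitary_mat 4 (Ub (sqrt x) (sqrt y))" using assms by (intro Ub_unitary) simp_all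
  fix i j :: nat assume i: "i < 2" and j: "j < 2"
  show "Ub (sqrt x) (sqrt y) $$ (i,j) = dg (sqrt x) (sqrt y) $$ (i,j)"
    using less2[OF i] less2[OF j] by (elim disjE) (simp_all add: Ub_vals Ub_vals1 dg_idx)
qed simp_all

lemma sqrt_diff_le: assumes u: "u \<ge> 1/4" and v: "v \<ge> 1/4" shows "\<bar>sqrt u - sqrt v\<bar> \<le> \<bar>u - v\<bar>"
proof -
  have h: "sqrt (1/4) = (1/2::real)" by (simp add: real_sqrt_divide)
  have su: "sqrt u \<ge> 1/2" using real_sqrt_le_mono[OF u] h by simp
  have sv: "sqrt v \<ge> 1/2" using real_sqrt_le_mono[OF v] h by simp
  have "(sqrt u - sqrt v) * (sqrt u + sqrt v) = u - v" using u v by (simp add: algebra_simps)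
  hence "\<bar>u - v\<bar> = \<bar>sqrt u - sqrt v\<bar> * \<bar>sqrt u + sqrt v\<bar>" by (metis abs_mult)
  also have "\<bar>sqrt u + sqrt v\<bar> = sqrt u + sqrt v" using su sv by simp
  finally have eq: "\<bar>u - v\<bar> = \<bar>sqrt u - sqrt v\<bar> * (sqrt u + sqrt v)" .
  have "\<bar>sqrt u - sqrt v\<bar> * 1 \<le> \<bar>sqrt u - sqrt v\<bar> * (sqrt u + sqrt v)"
    using su sv by (intro mult_left_mono) auto
  hence "\<bar>sqrt u - sqrt v\<bar> \<le> \<bar>sqrt u - sqrt v\<bar> * (sqrt u + sqrt v)" by simp
  moreover note eq
  ultimately show ?thesis by simp
qed


lemma nv_unit: "nv (unit_vec n 0) \<le> 1"
proof -
  have "nsq (unit_vec n 0) \<le> 1"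
  proof (cases "n = 0")
    case True thus ?thesis unfolding nsq_def by simp
  next
    case False
    have "nsq (unit_vec n 0) = (\<Sum>i<n. (cmod (unit_vec n 0 $ i))^2)" unfolding nsq_def by simp
    also have "\<dots> = (\<Sum>i<n. if i = 0 then 1 else 0)" by (intro sum.cong refl) (auto simp: unit_vec_def)
    also have "\<dots> = 1" using False by simp
    finally show ?thesis by simp
  qed
  thus ?thesis unfolding nv_nsq by simp
qed

lemma pt00: "partial_trace_2 2 S \<psi> $$ (0,0) = (\<Sum>s<S. \<psi> $ s * cnj (\<psi> $ s))"
  unfolding partial_trace_2_def by simp

lemma pt_carrier: "partial_trace_2 2 S \<psi> \<in> carrier_mat 2 2"
  unfolding partial_trace_2_def by simp

lemma herm_AA: assumes X: "(X::complex mat) \<in> carrier_mat n n" shows "hermitian_mat n (mat_adjoint X * X)"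
  unfolding hermitian_mat_def
proof
  show "mat_adjoint X * X \<in> carrier_mat n n" by (rule mult_carrier_mat[OF adj_carrier[OF X] X])
  show "mat_adjoint (mat_adjoint X * X) = mat_adjoint X * X"
    unfolding adj_mult[OF adj_carrier[OF X] X] adj_adj ..
qed

lemma entry_bound: assumes X: "X \<in> carrier_mat 2 2" and t: "trace_norm X \<le> 0.01"
  shows "cmod (X $$ (0,0)) \<le> 0.01"
proof -
  have "\<exists>V d. spectral_dec 2 (mat_adjoint X * X) V d" by (rule herm2_spec[OF herm_AA[OF X]])
  from tn_lower[OF X _ this] t show ?thesis by simp
qed

theorem theorem2p52:
  shows "\<exists>c > (0::real). \<forall>\<beta> \<ge> (4::real). \<exists>N M. 0 < N \<and> N \<le> M \<and>
     (\<forall>R S V0 steps. valid_alg N M R S V0 steps \<longrightarrow> solves_gibbs \<beta> N M R S V0 steps \<longrightarrow>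
        real (length steps) \<ge> c * \<beta>)"
proof (intro exI[of _ "1/20"] conjI allI impI)
  fix \<beta> :: real assume b4: "\<beta> \<ge> 4"
  show "\<exists>N M. 0 < N \<and> N \<le> M \<and>
     (\<forall>R S V0 steps. valid_alg N M R S V0 steps \<longrightarrow> solves_gibbs \<beta> N M R S V0 steps \<longrightarrow>
        real (length steps) \<ge> 1/20 * \<beta>)"
  proof (rule exI[of _ 2], rule exI[of _ 4], intro conjI allI impI)
    fix R S V0 steps
    assume va: "valid_alg 2 4 R S V0 steps" and sg: "solves_gibbs \<beta> 2 4 R S V0 steps"
    define D where "D = 2 * 4 * R"
    have SD: "S \<le> D" and V0u: "unitary_mat D V0" and stu: "\<And>st. st \<in> set steps \<Longrightarrow> unitary_mat D (snd st)"
      using va unfolding valid_alg_def D_def by auto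
    define a :: real where "a = 1/4"
    define b :: real where "b = 1/4 + 1/\<beta>"
    have bp: "\<beta> > 0" using b4 by simp
    have ab: "a \<noteq> b" unfolding a_def b_def using bp by simp
    have ib: "1/\<beta> \<le> 1/4" using b4 by (simp add: field_simps)
    have a01: "0 \<le> a" "a \<le> 1" unfolding a_def by auto
    have b01: "0 \<le> b" "b \<le> 1" unfolding b_def using bp ib by (simp, linarith)
    define U1 where "U1 = Ub (sqrt a) (sqrt b)"
    define U2 where "U2 = Ub (sqrt b) (sqrt a)"
    have U1u: "unitary_mat 4 U1" unfolding U1_def using a01 b01 by (intro Ub_unitary) simp_all
    have U2u: "unitary_mat 4 U2" unfolding U2_def using a01 b01 by (intro Ub_unitary) simp_all
    have be1: "block_encoding 2 4 (mat_sqrt (dg a b)) U1" unfolding sqrt_dg[OF ab] U1_def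
      by (rule be_dg) (use a01 b01 in auto)
    have be2: "block_encoding 2 4 (mat_sqrt (dg b a)) U2" unfolding sqrt_dg[OF ab[symmetric]] U2_def
      by (rule be_dg) (use a01 b01 in auto)
    define o1 where "o1 = alg_output 2 4 R S V0 steps U1"
    define o2 where "o2 = alg_output 2 4 R S V0 steps U2"
    define G1 where "G1 = gibbs_state \<beta> (dg a b)"
    define G2 where "G2 = gibbs_state \<beta> (dg b a)"
    have t1: "trace_norm (o1 - G1) \<le> 0.01" using sg dg_psd[of a b] be1 a01 b01
      unfolding solves_gibbs_def o1_def G1_def by auto
    have t2: "trace_norm (o2 - G2) \<le> 0.01" using sg dg_psd[of b a] be2 a01 b01
      unfolding solves_gibbs_def o2_def G2_def by auto
    have G1c: "G1 \<in> carrier_mat 2 2" unfolding G1_def gibbs_state_def Let_def mf_dg[OF ab] by simp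
    have G2c: "G2 \<in> carrier_mat 2 2" unfolding G2_def gibbs_state_def Let_def mf_dg[OF ab[symmetric]] by simp
    have o1c: "o1 \<in> carrier_mat 2 2" unfolding o1_def alg_output_def by (rule pt_carrier)
    have o2c: "o2 \<in> carrier_mat 2 2" unfolding o2_def alg_output_def by (rule pt_carrier)
    have e1: "cmod (o1 $$ (0,0) - G1 $$ (0,0)) \<le> 0.01"
      using entry_bound[OF minus_carrier_mat[OF G1c] t1] G1c by simp
    have e2: "cmod (o2 $$ (0,0) - G2 $$ (0,0)) \<le> 0.01"
      using entry_bound[OF minus_carrier_mat[OF G2c] t2] G2c by simp
    define ea where "ea = exp (-\<beta>*a)"
    define eb where "eb = exp (-\<beta>*b)"
    define q :: real where "q = exp (-1)"
    have q0: "q > 0" unfolding q_def by simp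
    have ebea: "eb = ea * q"
    proof -
      have "-\<beta>*b = -\<beta>*a + (-1)" using bp by (simp add: a_def b_def field_simps)
      thus ?thesis unfolding ea_def eb_def q_def by (simp only: exp_add)
    qed
    have ea0: "ea > 0" unfolding ea_def by simp
    have G1e: "G1 $$ (0,0) = complex_of_real (ea / (ea + eb))" unfolding G1_def ea_def eb_def by (rule gibbs_dg[OF ab])
    have G2e: "G2 $$ (0,0) = complex_of_real (eb / (eb + ea))" unfolding G2_def ea_def eb_def by (rule gibbs_dg[OF ab[symmetric]])
    have em: "q \<le> 1/2"
    proof -
      have "2 \<le> exp (1::real)" using exp_ge_add_one_self[of 1] by simp
      thus ?thesis unfolding q_def by (simp add: exp_minus field_simps)
    qed
    have gap: "1/3 \<le> ea / (ea + eb) - eb / (eb + ea)"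
    proof -
      have s1: "ea + ea * q = ea * (1 + q)" by (simp add: algebra_simps)
      have s2: "ea * q + ea = ea * (1 + q)" by (simp add: algebra_simps)
      have f1: "ea / (ea + ea * q) = 1 / (1 + q)" unfolding s1 using ea0 by simp
      have f2: "ea * q / (ea * q + ea) = q / (1 + q)" unfolding s2 using ea0 by simp
      have "ea / (ea + eb) - eb / (eb + ea) = 1 / (1 + q) - q / (1 + q)"
        unfolding ebea f1 f2 ..
      also have "\<dots> = (1 - q) / (1 + q)" by (simp add: diff_divide_distrib)
      finally have "ea / (ea + eb) - eb / (eb + ea) = (1 - q) / (1 + q)" .
      moreover have "1/3 \<le> (1 - q) / (1 + q)"
      proof -
        have "1/3 * (1 + q) \<le> 1 - q" using em by simp
        thus ?thesis using q0 by (simp add: le_divide_eq)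
      qed
      ultimately show ?thesis by simp
    qed
    have Gd: "cmod (G1 $$ (0,0) - G2 $$ (0,0)) \<ge> 1/3"
    proof -
      have "G1 $$ (0,0) - G2 $$ (0,0) = complex_of_real (ea / (ea + eb) - eb / (eb + ea))"
        unfolding G1e G2e by simp
      hence "cmod (G1 $$ (0,0) - G2 $$ (0,0)) = \<bar>ea / (ea + eb) - eb / (eb + ea)\<bar>" by (simp only: norm_of_real)
      thus ?thesis using gap by simp
    qed
    define d :: real where "d = 2 / \<beta>"
    have d0: "d \<ge> 0" unfolding d_def using bp by simp
    have oU: "opn (U1 - U2) 4 d"
      unfolding U1_def U2_def
    proof (rule Ub_diff)
      have sa: "sqrt a ^ 2 = a" and sb: "sqrt b ^ 2 = b" using a01 b01 by simp_all
      have d1: "\<bar>sqrt a - sqrt b\<bar> \<le> 1/\<beta>"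
      proof -
        have "\<bar>sqrt a - sqrt b\<bar> \<le> \<bar>a - b\<bar>" by (rule sqrt_diff_le) (simp_all add: a_def b_def less_imp_le[OF bp])
        thus ?thesis unfolding a_def b_def using bp by simp
      qed
      have d2: "\<bar>sqrt (1 - a) - sqrt (1 - b)\<bar> \<le> 1/\<beta>"
      proof -
        have "\<bar>sqrt (1 - a) - sqrt (1 - b)\<bar> \<le> \<bar>(1 - a) - (1 - b)\<bar>"
          by (rule sqrt_diff_le) (use ib in \<open>simp_all add: a_def b_def\<close>)
        thus ?thesis unfolding a_def b_def using bp by simp
      qed
      have "\<bar>sqrt a - sqrt b\<bar>^2 \<le> (1/\<beta>)^2" by (rule power_mono[OF d1]) (use bp in simp)
      hence "(sqrt a - sqrt b)^2 \<le> (1/\<beta>)^2" by simp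
      moreover have "\<bar>sqrt (1 - a) - sqrt (1 - b)\<bar>^2 \<le> (1/\<beta>)^2" by (rule power_mono[OF d2]) (use bp in simp)
      hence "(sqrt (1 - a) - sqrt (1 - b))^2 \<le> (1/\<beta>)^2" by simp
      moreover have "2 * (1/\<beta>)^2 \<le> d^2"
      proof -
        have "2 * (1/\<beta>)^2 = 2 / (\<beta>*\<beta>)" by (simp add: power2_eq_square)
        also have "\<dots> \<le> 4 / (\<beta>*\<beta>)" using bp by (intro divide_right_mono) auto
        also have "\<dots> = d^2" unfolding d_def by (simp add: power2_eq_square)
        finally show ?thesis .
      qed
      ultimately show "(sqrt a - sqrt b)^2 + (sqrt (1 - (sqrt a)^2) - sqrt (1 - (sqrt b)^2))^2 \<le> d^2"
        unfolding sa sb by simp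
    qed
    have oUa: "opn (mat_adjoint U1 - mat_adjoint U2) 4 d" unfolding U1_def U2_def Ub_adj using oU unfolding U1_def U2_def .
    define KA where "KA = (\<lambda>k. kron (query_op 4 U1 k) (1\<^sub>m R))"
    define KB where "KB = (\<lambda>k. kron (query_op 4 U2 k) (1\<^sub>m R))"
    have U1c: "U1 \<in> carrier_mat 4 4" and U2c: "U2 \<in> carrier_mat 4 4" unfolding U1_def U2_def by simp_all
    have K: "KA k \<in> carrier_mat D D \<and> KB k \<in> carrier_mat D D \<and> opn (KA k) D 1 \<and> opn (KB k) D 1 \<and> opn (KA k - KB k) D d" for k
      unfolding KA_def KB_def D_def
      using kron_carrier[OF query_carrier[OF U1c], of k R] kron_carrier[OF query_carrier[OF U2c], of k R]
        kron_opn[OF query_carrier[OF U1c] query_opn1[OF U1u], of k R]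
        kron_opn[OF query_carrier[OF U2c] query_opn1[OF U2u], of k R]
        kron_opn_diff[OF query_carrier[OF U1c] query_carrier[OF U2c] query_opn_diff[OF U1c U2c oU oUa d0], of k R]
      by simp
    have st: "snd st \<in> carrier_mat D D \<and> opn (snd st) D 1" if "st \<in> set steps" for st
      using stu[OF that] opn_nonneg_one[OF stu[OF that]] unfolding unitary_mat_def by auto
    have V0c: "V0 \<in> carrier_mat D D" "opn V0 D 1" using V0u opn_nonneg_one[OF V0u] unfolding unitary_mat_def by auto
    define x :: "complex vec" where "x = unit_vec D 0"
    have x: "x \<in> carrier_vec D" "nv x \<le> 1" unfolding x_def using nv_unit by auto
    note hy = hybrid[where steps=steps and D=D and Vz=V0 and KA=KA and KB=KB and d=d and x=x, OF st V0c K x d0]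
    define \<psi>1 where "\<psi>1 = alg_unitary 4 R V0 steps U1 *\<^sub>v x"
    define \<psi>2 where "\<psi>2 = alg_unitary 4 R V0 steps U2 *\<^sub>v x"
    have AU1: "alg_unitary 4 R V0 steps U1 = foldl (\<lambda>W (k, V). V * KA k * W) V0 steps" unfolding alg_unitary_def KA_def ..
    have AU2: "alg_unitary 4 R V0 steps U2 = foldl (\<lambda>W (k, V). V * KB k * W) V0 steps" unfolding alg_unitary_def KB_def ..
    have p1: "\<psi>1 \<in> carrier_vec D" unfolding \<psi>1_def AU1 using hy x by auto
    have p2: "\<psi>2 \<in> carrier_vec D" unfolding \<psi>2_def AU2 using hy x by auto
    have n1: "nv \<psi>1 \<le> 1" and n2: "nv \<psi>2 \<le> 1" and n12: "nv (\<psi>1 - \<psi>2) \<le> real (length steps) * d"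
      unfolding \<psi>1_def \<psi>2_def AU1 AU2 using hy by auto
    have o1e: "o1 $$ (0,0) = (\<Sum>s<S. \<psi>1 $ s * cnj (\<psi>1 $ s))"
      unfolding o1_def alg_output_def pt00 \<psi>1_def x_def D_def ..
    have o2e: "o2 $$ (0,0) = (\<Sum>s<S. \<psi>2 $ s * cnj (\<psi>2 $ s))"
      unfolding o2_def alg_output_def pt00 \<psi>2_def x_def D_def ..
    have od: "cmod (o1 $$ (0,0) - o2 $$ (0,0)) \<le> 2 * (real (length steps) * d)"
      unfolding o1e o2e using out_diff[OF p1 p2 SD n1 n2] n12 by simp
    have "G1 $$ (0,0) - G2 $$ (0,0) = (G1 $$ (0,0) - o1 $$ (0,0)) + (o1 $$ (0,0) - o2 $$ (0,0)) + (o2 $$ (0,0) - G2 $$ (0,0))"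
      by simp
    hence "cmod (G1 $$ (0,0) - G2 $$ (0,0)) = cmod ((G1 $$ (0,0) - o1 $$ (0,0)) + (o1 $$ (0,0) - o2 $$ (0,0)) + (o2 $$ (0,0) - G2 $$ (0,0)))"
      by (rule arg_cong)
    also have "\<dots> \<le> cmod (G1 $$ (0,0) - o1 $$ (0,0)) + cmod (o1 $$ (0,0) - o2 $$ (0,0)) + cmod (o2 $$ (0,0) - G2 $$ (0,0))"
      by (rule order_trans[OF norm_triangle_ineq add_right_mono[OF norm_triangle_ineq]])
    also have "cmod (G1 $$ (0,0) - o1 $$ (0,0)) = cmod (o1 $$ (0,0) - G1 $$ (0,0))" by (rule norm_minus_commute)
    finally have "1/3 \<le> 1/100 + 2 * (real (length steps) * d) + 1/100" using Gd e1 e2 od by simp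
    moreover have "2 * (real (length steps) * d) = 4 * real (length steps) / \<beta>" unfolding d_def by simp
    ultimately have "1/3 - 1/50 \<le> 4 * real (length steps) / \<beta>" by simp
    hence "(1/3 - 1/50) * \<beta> \<le> 4 * real (length steps)" using bp by (simp add: le_divide_eq)
    thus "1/20 * \<beta> \<le> real (length steps)" using bp by simp
  qed simp_all
qed simp


end
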